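(* Let $G$ be a finite simple graph on $n$ vertices with maximum degree $\Delta \ge 1$, and let $\lambda_{2}$ be the second smallest Laplacian eigenvalue of $G$. Then \[ \mathrm{tw}(G) \ge \frac{n \lambda_{2}}{\Delta + \lambda_{2}} - 1, \] where $\mathrm{tw}(G)$ is the treewidth of $G$.
   Context: For a graph $G=(V,E)$ with $n$ vertices, the Laplacian matrix $L \in \mathbb{Z}^{V\times V}$ is given by $L(u,u)=\deg(u)$, $L(u,v)=-1$ if $\{u,v\}\in E$, and $L(u,v)=0$ otherwise (for $u \ne v$). The Laplacian eigenvalues are the eigenvalues of $L$, listed in non-decreasing order as $\lambda_1 \le \lambda_2 \le \dots \le \lambda_n$. Treewidth is the standard notion: the minimum, over all tree decompositions of $G$, of the maximum bag size minus one. *)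

theory Defs
  imports "Jordan_Normal_Form.Char_Poly" "HOL-Library.Multiset"
begin

definition simple_graph :: "nat \<Rightarrow> (nat \<Rightarrow> nat \<Rightarrow> bool) \<Rightarrow> bool" where
  "simple_graph n E \<longleftrightarrow> (\<forall>u v. E u v \<longrightarrow> E v u) \<and> (\<forall>u. \<not> E u u)
      \<and> (\<forall>u v. E u v \<longrightarrow> u < n \<and> v < n)"

definition degree_g :: "nat \<Rightarrow> (nat \<Rightarrow> nat \<Rightarrow> bool) \<Rightarrow> nat \<Rightarrow> nat" where
  "degree_g n E u = card {v. v < n \<and> E u v}"

definition max_degree :: "nat \<Rightarrow> (nat \<Rightarrow> nat \<Rightarrow> bool) \<Rightarrow> nat" where
  "max_degree n E = Max (degree_g n E ` {0..<n})"

definition laplacian :: "nat \<Rightarrow> (nat \<Rightarrow> nat \<Rightarrow> bool) \<Rightarrow> real mat" where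
  "laplacian n E = mat n n (\<lambda>(u, v). if u = v then real (degree_g n E u)
                                      else if E u v then -1 else 0)"

text \<open>Laplacian eigenvalues with multiplicity (roots of the characteristic polynomial),
  listed in non-decreasing order; lambda_k is the (k-1)-th entry of the list.\<close>
definition laplacian_eigenvalues :: "nat \<Rightarrow> (nat \<Rightarrow> nat \<Rightarrow> bool) \<Rightarrow> real list" where
  "laplacian_eigenvalues n E = sorted_list_of_multiset (proots (char_poly (laplacian n E)))"

definition lambda2 :: "nat \<Rightarrow> (nat \<Rightarrow> nat \<Rightarrow> bool) \<Rightarrow> real" where
  "lambda2 n E = laplacian_eigenvalues n E ! 1"

definition connected_on :: "(nat \<Rightarrow> nat \<Rightarrow> bool) \<Rightarrow> nat set \<Rightarrow> bool" where
  "connected_on F S \<longleftrightarrow> (\<forall>a\<in>S. \<forall>b\<in>S. (\<lambda>x y. F x y \<and> x \<in> S \<and> y \<in> S)\<^sup>*\<^sup>* a b)"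

definition is_cycle :: "(nat \<Rightarrow> nat \<Rightarrow> bool) \<Rightarrow> nat list \<Rightarrow> bool" where
  "is_cycle F cs \<longleftrightarrow> length cs \<ge> 3 \<and> distinct cs
      \<and> (\<forall>i. Suc i < length cs \<longrightarrow> F (cs ! i) (cs ! Suc i)) \<and> F (last cs) (hd cs)"

definition is_tree :: "nat \<Rightarrow> (nat \<Rightarrow> nat \<Rightarrow> bool) \<Rightarrow> bool" where
  "is_tree m F \<longleftrightarrow> m \<ge> 1 \<and> simple_graph m F \<and> connected_on F {0..<m}
      \<and> (\<nexists>cs. is_cycle F cs)"

definition tree_decomposition ::
  "nat \<Rightarrow> (nat \<Rightarrow> nat \<Rightarrow> bool) \<Rightarrow> nat \<Rightarrow> (nat \<Rightarrow> nat \<Rightarrow> bool) \<Rightarrow> (nat \<Rightarrow> nat set) \<Rightarrow> bool" where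
  "tree_decomposition n E m F B \<longleftrightarrow> is_tree m F
      \<and> (\<forall>t<m. B t \<subseteq> {0..<n})
      \<and> (\<forall>v<n. \<exists>t<m. v \<in> B t)
      \<and> (\<forall>u v. E u v \<longrightarrow> (\<exists>t<m. u \<in> B t \<and> v \<in> B t))
      \<and> (\<forall>v<n. connected_on F {t. t < m \<and> v \<in> B t})"

definition decomposition_width :: "nat \<Rightarrow> (nat \<Rightarrow> nat set) \<Rightarrow> nat" where
  "decomposition_width m B = Max ((\<lambda>t. card (B t)) ` {0..<m}) - 1"

definition treewidth :: "nat \<Rightarrow> (nat \<Rightarrow> nat \<Rightarrow> bool) \<Rightarrow> nat" where
  "treewidth n E = (LEAST k. \<exists>m F B. tree_decomposition n E m F B \<and> decomposition_width m B = k)"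

end

theory Submission
  imports Defs "Jordan_Normal_Form.Schur_Decomposition"
begin


lemma conj_real_vec[simp]: "conjugate (v::real vec) = v"
  by (rule eq_vecI) auto

lemma real_csprod[simp]: "(v::real vec) \<bullet>c w = v \<bullet> w"
  by simp

lemma real_sprod_self_pos: "(v::real vec) \<in> carrier_vec n \<Longrightarrow> v \<noteq> 0\<^sub>v n \<Longrightarrow> v \<bullet> v > 0"
  by (metis conj_real_vec conjugate_square_greater_0_vec)

lemma orth_completion:
  fixes v :: "real vec"
  assumes v: "v \<in> carrier_vec n" and v1: "v \<bullet> v = 1"
  shows "\<exists>W \<in> carrier_mat n n. transpose_mat W * W = 1\<^sub>m n \<and> col W 0 = v"
proof -
  interpret cof_vec_space n "TYPE(real)" .
  have v0: "v \<noteq> 0\<^sub>v n" using v1 by auto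
  define b where "b = basis_completion v"
  from basis_completion[OF v v0, folded b_def]
  have span_b: "span (set b) = carrier_vec n" and dist_b: "distinct b" 
    and indep: "\<not> lin_dep (set b)" and b: "set b \<subseteq> carrier_vec n" and hdb: "hd b = v" 
    and len_b: "length b = n" by auto
  have n: "n > 0" using v v1 by (cases n) (auto simp: scalar_prod_def)
  from hdb len_b n obtain vs where bv: "b = v # vs" by (cases b, auto)
  define ws where "ws = gram_schmidt n b"
  from gram_schmidt_result[OF b dist_b indep ws_def]
  have ws: "set ws \<subseteq> carrier_vec n" "corthogonal ws" "length ws = n" 
    by (auto simp: len_b)
  from gram_schmidt_hd[OF v, of vs, folded bv] have hdws: "hd ws = v" unfolding ws_def .
  define ws' where "ws' = map (\<lambda>w. (1 / sqrt (w \<bullet> w)) \<cdot>\<^sub>v w) ws"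
  have wsi: "ws ! i \<in> carrier_vec n" if "i < n" for i using ws that by auto
  have orth: "ws ! i \<bullet> ws ! j = 0 \<longleftrightarrow> i \<noteq> j" if "i < n" "j < n" for i j
    using ws(2) that ws(3) unfolding corthogonal_def by auto
  have pos: "ws ! i \<bullet> ws ! i > 0" if "i < n" for i
    using real_sprod_self_pos[OF wsi[OF that]] orth[OF that that] by fastforce
  have ws'i: "ws' ! i = (1 / sqrt (ws ! i \<bullet> ws ! i)) \<cdot>\<^sub>v ws ! i" if "i < n" for i
    using that ws(3) unfolding ws'_def by auto
  have ws'c: "ws' ! i \<in> carrier_vec n" if "i < n" for i using ws'i[OF that] wsi[OF that] by auto
  have on: "ws' ! i \<bullet> ws' ! j = (if i = j then 1 else 0)" if "i < n" "j < n" for i j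
  proof -
    have "ws' ! i \<bullet> ws' ! j = (1 / sqrt (ws ! i \<bullet> ws ! i)) * (1 / sqrt (ws ! j \<bullet> ws ! j)) * (ws ! i \<bullet> ws ! j)"
      unfolding ws'i[OF that(1)] ws'i[OF that(2)] using wsi[OF that(1)] wsi[OF that(2)]
      by (simp add: smult_scalar_prod_distrib scalar_prod_smult_distrib)
    also have "\<dots> = (if i = j then 1 else 0)"
      using orth[OF that] pos[OF that(1)] by (auto simp: real_sqrt_mult[symmetric] simp del: real_sqrt_mult)
    finally show ?thesis .
  qed
  define W where "W = mat_of_cols n ws'"
  have lenws': "length ws' = n" unfolding ws'_def using ws by auto
  have W: "W \<in> carrier_mat n n" unfolding W_def using lenws' by auto
  have colW: "col W j = ws' ! j" if "j < n" for j
    unfolding W_def using that lenws' ws'c[OF that] by (auto simp: col_mat_of_cols)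
  have "transpose_mat W * W = 1\<^sub>m n"
    by (rule eq_matI) (use W colW on in auto)
  moreover have "col W 0 = v"
  proof -
    have "ws ! 0 = v" using hdws ws(3) n by (cases ws) auto
    thus ?thesis using colW[OF n] ws'i[OF n] v1 by simp
  qed
  ultimately show ?thesis using W by blast
qed

lemma sym_real_eigenvalue:
  fixes A :: "real mat"
  assumes A: "A \<in> carrier_mat n n" and n: "n > 0" and sym: "transpose_mat A = A"
  shows "\<exists>e. eigenvalue A e"
proof -
  let ?C = "map_mat complex_of_real A"
  have C: "?C \<in> carrier_mat n n" using A by auto
  have cp: "char_poly ?C = map_poly of_real (char_poly A)"
    by (rule of_real_hom.char_poly_hom[OF A])
  have "degree (char_poly ?C) = n" using degree_monic_char_poly[OF C] by auto
  hence "\<not> constant (poly (char_poly ?C))" using n by (simp add: constant_degree)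
  then obtain z where z: "poly (char_poly ?C) z = 0" using fundamental_theorem_of_algebra by blast
  hence "eigenvalue ?C z" using eigenvalue_root_char_poly[OF C] by auto
  then obtain v where ev: "eigenvector ?C v z" unfolding eigenvalue_def by auto
  hence v: "v \<in> carrier_vec n" and v0: "v \<noteq> 0\<^sub>v n" and Cv: "?C *\<^sub>v v = z \<cdot>\<^sub>v v"
    unfolding eigenvector_def using C by auto
  have symA: "\<And>i j. i < n \<Longrightarrow> j < n \<Longrightarrow> A $$ (i,j) = A $$ (j,i)"
    using sym A by (metis carrier_matD index_transpose_mat(1))
  define s where "s = (\<Sum>i<n. cnj (v$i) * (?C *\<^sub>v v)$i)"
  define q where "q = (\<Sum>i<n. cnj (v$i) * v$i)"
  have s1: "s = z * q" unfolding s_def q_def Cv using v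
    by (auto simp: sum_distrib_left intro!: sum.cong)
  have Cvi: "(?C *\<^sub>v v)$i = (\<Sum>j<n. of_real (A $$ (i,j)) * v$j)" if "i < n" for i
    using that v A by (auto simp: scalar_prod_def lessThan_atLeast0 intro!: sum.cong)
  have s2: "s = (\<Sum>i<n. \<Sum>j<n. cnj (v$i) * of_real (A $$ (i,j)) * v$j)"
    unfolding s_def by (auto simp: Cvi sum_distrib_left mult.assoc intro!: sum.cong)
  have "cnj s = (\<Sum>i<n. \<Sum>j<n. v$i * of_real (A $$ (i,j)) * cnj (v$j))"
    unfolding s2 by (simp add: cnj_sum)
  also have "\<dots> = (\<Sum>j<n. \<Sum>i<n. v$i * of_real (A $$ (i,j)) * cnj (v$j))"
    by (rule sum.swap)
  also have "\<dots> = s" unfolding s2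
    by (auto simp: symA mult_ac intro!: sum.cong)
  finally have cs: "cnj s = s" .
  have q: "q = of_real (\<Sum>i<n. (cmod (v$i))^2)" unfolding q_def
    by (simp add: complex_norm_square mult.commute del: of_real_power)
  obtain i where i: "i < n" "v$i \<noteq> 0" using v0 v by (metis carrier_vecD eq_vecI index_zero_vec(1) index_zero_vec(2))
  have "(\<Sum>i<n. (cmod (v$i))^2) > 0"
  proof -
    have "(\<Sum>i<n. (cmod (v$i))^2) \<ge> (cmod (v$i))^2"
      by (rule member_le_sum) (use i in auto)
    moreover have "(cmod (v$i))^2 > 0" using i by auto
    ultimately show ?thesis by linarith
  qed
  hence q0: "q \<noteq> 0" unfolding q by (metis of_real_eq_0_iff less_irrefl)
  have cq: "cnj q = q" unfolding q by (simp only: complex_cnj_complex_of_real)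
  have zq: "z = s / q" using s1 q0 by auto
  have "cnj z = z" unfolding zq using cs cq by simp
  hence zr: "z = of_real (Re z)" by (metis Reals_cnj_iff complex_is_Real_iff of_real_Re)
  have "of_real (poly (char_poly A) (Re z)) = (0::complex)"
    using z unfolding cp by (subst (asm) zr) (simp add: of_real_hom.poly_map_poly)
  hence "poly (char_poly A) (Re z) = 0" by simp
  thus ?thesis using eigenvalue_root_char_poly[OF A] by auto
qed

lemma spectral:
  fixes A :: "real mat"
  assumes "A \<in> carrier_mat n n" "transpose_mat A = A"
  shows "\<exists>U D. U \<in> carrier_mat n n \<and> D \<in> carrier_mat n n \<and> diagonal_mat D \<and>
     transpose_mat U * U = 1\<^sub>m n \<and> U * transpose_mat U = 1\<^sub>m n \<and> A = U * D * transpose_mat U"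
  using assms
proof (induct n arbitrary: A)
  case 0
  hence "A = 1\<^sub>m 0" by (intro eq_matI) auto
  thus ?case by (intro exI[of _ "1\<^sub>m 0"]) (auto simp: diagonal_mat_def)
next
  case (Suc m A)
  let ?n = "Suc m"
  have A: "A \<in> carrier_mat ?n ?n" and symA: "transpose_mat A = A" using Suc by auto
  obtain e where "eigenvalue A e" using sym_real_eigenvalue[OF A _ symA] by auto
  then obtain v0 where "eigenvector A v0 e" unfolding eigenvalue_def by auto
  hence v0: "v0 \<in> carrier_vec ?n" "v0 \<noteq> 0\<^sub>v ?n" "A *\<^sub>v v0 = e \<cdot>\<^sub>v v0"
    unfolding eigenvector_def using A by auto
  have p0: "v0 \<bullet> v0 > 0" using real_sprod_self_pos[OF v0(1,2)] .
  define v where "v = (1 / sqrt (v0 \<bullet> v0)) \<cdot>\<^sub>v v0"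
  have v: "v \<in> carrier_vec ?n" unfolding v_def using v0 by auto
  have v1: "v \<bullet> v = 1" unfolding v_def using v0(1) p0
    by (simp add: smult_scalar_prod_distrib scalar_prod_smult_distrib real_sqrt_mult[symmetric] del: real_sqrt_mult)
  have Av: "A *\<^sub>v v = e \<cdot>\<^sub>v v" unfolding v_def using v0 A
    by (simp add: mult_mat_vec smult_smult_assoc mult.commute)
  obtain W where W: "W \<in> carrier_mat ?n ?n" and WW: "transpose_mat W * W = 1\<^sub>m ?n" and cW: "col W 0 = v"
    using orth_completion[OF v v1] by auto
  have WT: "transpose_mat W \<in> carrier_mat ?n ?n" using W by auto
  have WW': "W * transpose_mat W = 1\<^sub>m ?n" using mat_mult_left_right_inverse[OF WT W WW] .
  have colW: "col W i \<in> carrier_vec ?n" for i using W unfolding carrier_vec_def by simp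
  have cc: "col W i \<bullet> col W j = (if i = j then 1 else 0)" if "i < ?n" "j < ?n" for i j
  proof -
    have "(transpose_mat W * W) $$ (i,j) = col W i \<bullet> col W j" using W that by auto
    thus ?thesis using WW that by auto
  qed
  define A' where "A' = transpose_mat W * (A * W)"
  have A': "A' \<in> carrier_mat ?n ?n" unfolding A'_def using W A by auto
  have A'ij: "A' $$ (i,j) = col W i \<bullet> (A *\<^sub>v col W j)" if "i < ?n" "j < ?n" for i j
  proof -
    have "A' $$ (i,j) = row (transpose_mat W) i \<bullet> col (A * W) j" unfolding A'_def using that W A by simp
    also have "col (A * W) j = A *\<^sub>v col W j" using col_mult2[OF A W that(2)] .
    also have "row (transpose_mat W) i = col W i" using that W by simp
    finally show ?thesis .
  qed
  have symA': "A' $$ (i,j) = A' $$ (j,i)" if "i < ?n" "j < ?n" for i j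
  proof -
    have "col W i \<bullet> (A *\<^sub>v col W j) = (transpose_mat A *\<^sub>v col W i) \<bullet> col W j"
      using transpose_vec_mult_scalar[OF A colW colW] by simp
    also have "\<dots> = col W j \<bullet> (A *\<^sub>v col W i)" using symA A colW
      by (metis comm_scalar_prod mult_mat_vec_carrier)
    finally show ?thesis using A'ij that by auto
  qed
  have A'i0: "A' $$ (i,0) = (if i = 0 then e else 0)" if "i < ?n" for i
  proof -
    have "A' $$ (i,0) = col W i \<bullet> (e \<cdot>\<^sub>v col W 0)" using A'ij[OF that] cW Av by simp
    also have "\<dots> = e * (col W i \<bullet> col W 0)" using colW by simp
    finally show ?thesis using cc[OF that] by simp
  qed
  define A3 where "A3 = mat m m (\<lambda>(i,j). A' $$ (Suc i, Suc j))"
  have A3: "A3 \<in> carrier_mat m m" unfolding A3_def by auto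
  have symA3: "transpose_mat A3 = A3" unfolding A3_def
    by (rule eq_matI) (auto simp: symA')
  obtain U3 D3 where U3: "U3 \<in> carrier_mat m m" and D3: "D3 \<in> carrier_mat m m"
    and dD3: "diagonal_mat D3" and UU3: "transpose_mat U3 * U3 = 1\<^sub>m m"
    and UU3': "U3 * transpose_mat U3 = 1\<^sub>m m" and A3eq: "A3 = U3 * D3 * transpose_mat U3"
    using Suc(1)[OF A3 symA3] by blast
  define E where "E = mat 1 1 (\<lambda>_. e)"
  have E: "E \<in> carrier_mat 1 1" unfolding E_def by auto
  have A'blk: "A' = four_block_mat E (0\<^sub>m 1 m) (0\<^sub>m m 1) A3"
  proof (rule eq_matI)
    fix i j assume ij: "i < dim_row (four_block_mat E (0\<^sub>m 1 m) (0\<^sub>m m 1) A3)"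
      "j < dim_col (four_block_mat E (0\<^sub>m 1 m) (0\<^sub>m m 1) A3)"
    hence i: "i < ?n" and j: "j < ?n" using E A3 by auto
    show "A' $$ (i, j) = four_block_mat E (0\<^sub>m 1 m) (0\<^sub>m m 1) A3 $$ (i, j)"
    proof (cases "i = 0")
      case True
      thus ?thesis using i j E A3 A'i0[OF j] symA'[OF i j] by (auto simp: E_def)
    next
      case False
      then obtain i' where i': "i = Suc i'" by (cases i) auto
      show ?thesis
      proof (cases "j = 0")
        case True
        thus ?thesis using i j E A3 A'i0[OF i] False by (auto simp: E_def)
      next
        case False
        then obtain j' where j': "j = Suc j'" by (cases j) auto
        show ?thesis using i j i' j' E A3 by (auto simp: A3_def)
      qed
    qed
  qed (use E A3 A' in auto)
  define U' where "U' = four_block_mat (1\<^sub>m 1) (0\<^sub>m 1 m) (0\<^sub>m m 1) U3"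
  define D where "D = four_block_mat E (0\<^sub>m 1 m) (0\<^sub>m m 1) D3"
  have U': "U' \<in> carrier_mat ?n ?n" unfolding U'_def using U3 by auto
  have D: "D \<in> carrier_mat ?n ?n" unfolding D_def using D3 E by auto
  have U'T: "transpose_mat U' = four_block_mat (1\<^sub>m 1) (0\<^sub>m 1 m) (0\<^sub>m m 1) (transpose_mat U3)"
    unfolding U'_def by (subst transpose_four_block_mat) (use U3 in auto)
  have UD: "U' * D = four_block_mat E (0\<^sub>m 1 m) (0\<^sub>m m 1) (U3 * D3)"
    unfolding U'_def D_def by (subst mult_four_block_mat) (use U3 D3 E in auto)
  have "U' * D * transpose_mat U' = four_block_mat E (0\<^sub>m 1 m) (0\<^sub>m m 1) (U3 * D3) * 
      four_block_mat (1\<^sub>m 1) (0\<^sub>m 1 m) (0\<^sub>m m 1) (transpose_mat U3)"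
    unfolding UD U'T ..
  also have "\<dots> = four_block_mat E (0\<^sub>m 1 m) (0\<^sub>m m 1) (U3 * D3 * transpose_mat U3)"
    by (subst mult_four_block_mat) (use U3 D3 E in auto)
  finally have A'eq: "A' = U' * D * transpose_mat U'" using A'blk A3eq by simp
  have UU': "transpose_mat U' * U' = 1\<^sub>m ?n"
  proof -
    have "transpose_mat U' * U' = four_block_mat (1\<^sub>m 1) (0\<^sub>m 1 m) (0\<^sub>m m 1) (transpose_mat U3 * U3)"
      by (subst U'T, unfold U'_def, subst mult_four_block_mat) (use U3 in auto)
    thus ?thesis using UU3 four_block_one_mat[of 1 m] by simp
  qed
  define U where "U = W * U'"
  have U: "U \<in> carrier_mat ?n ?n" unfolding U_def using W U' by auto
  have UT: "transpose_mat U = transpose_mat U' * transpose_mat W"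
    unfolding U_def using transpose_mult[OF W U'] .
  have UU: "transpose_mat U * U = 1\<^sub>m ?n"
  proof -
    have "transpose_mat U * U = transpose_mat U' * (transpose_mat W * (W * U'))"
      by (subst UT, unfold U_def, rule assoc_mult_mat[of _ ?n ?n _ ?n _ ?n]) (use W U' in auto)
    also have "transpose_mat W * (W * U') = (transpose_mat W * W) * U'"
      by (rule assoc_mult_mat[symmetric, of _ ?n ?n _ ?n _ ?n]) (use W U' in auto)
    also have "\<dots> = U'" using WW U' by simp
    finally show ?thesis using UU' by simp
  qed
  have UTc: "transpose_mat U \<in> carrier_mat ?n ?n" using U by auto
  have UU'': "U * transpose_mat U = 1\<^sub>m ?n" using mat_mult_left_right_inverse[OF UTc U UU] .
  have mc: "X * Y \<in> carrier_mat ?n ?n" if "X \<in> carrier_mat ?n ?n" "Y \<in> carrier_mat ?n ?n" for X Y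
    using that by auto
  have asc: "X * Y * Z = X * (Y * Z)" if "X \<in> carrier_mat ?n ?n" "Y \<in> carrier_mat ?n ?n" "Z \<in> carrier_mat ?n ?n" for X Y Z
    using that by auto
  have "A = (W * transpose_mat W) * A * (W * transpose_mat W)" using WW' A by simp
  also have "\<dots> = W * A' * transpose_mat W" unfolding A'_def using W A WT
    by (simp only: asc mc)
  also have "\<dots> = U * D * transpose_mat U" using W U' D WT
    by (subst A'eq, subst UT, unfold U_def, simp only: asc mc U'T[symmetric] transpose_carrier_mat)
  finally have "A = U * D * transpose_mat U" .
  moreover have "diagonal_mat D" unfolding D_def diagonal_mat_def using dD3 E D3
    by (auto simp: diagonal_mat_def)
  ultimately show ?case using U D UU UU'' by blast
qed



lemma sort_second_le:
  fixes xs :: "real list"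
  assumes i0: "i0 < length xs" and mn: "\<forall>k<length xs. xs!i0 \<le> xs!k"
    and j: "j < length xs" "j \<noteq> i0"
  shows "sort xs ! 1 \<le> xs ! j"
proof -
  define ys where "ys = take i0 xs @ drop (Suc i0) xs"
  have "mset xs = add_mset (xs!i0) (mset ys)"
    using id_take_nth_drop[OF i0] unfolding ys_def by (metis mset.simps(2) mset_append union_mset_add_mset_right)
  hence s: "sort xs = insort (xs!i0) (sort ys)"
    by (metis sorted_list_of_multiset_insert sorted_list_of_multiset_mset)
  have jy: "xs!j \<in> set ys"
  proof (cases "j < i0")
    case True thus ?thesis unfolding ys_def using j i0 by (auto simp: in_set_conv_nth intro!: exI[of _ j])
  next
    case False
    hence "j > i0" using j by auto
    thus ?thesis unfolding ys_def using j i0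
      by (auto simp: in_set_conv_nth min_def intro!: exI[of _ "j - Suc i0"])
  qed
  have ysx: "set ys \<subseteq> set xs" unfolding ys_def using set_drop_subset set_take_subset by (metis Un_least set_append)
  have allx: "\<forall>x\<in>set xs. xs!i0 \<le> x" using mn by (auto simp: in_set_conv_nth)
  have all: "\<forall>x\<in>set (sort ys). xs!i0 \<le> x" using allx ysx by auto
  obtain a L where aL: "sort ys = a # L" using jy by (cases "sort ys") (metis empty_iff list.set(1) set_sort, auto)
  have "insort (xs!i0) (sort ys) = xs!i0 # sort ys" using all aL by auto
  hence "sort xs ! 1 = a" using s aL by simp
  moreover have "a \<le> xs!j"
  proof -
    have "sorted (a # L)" using aL by (metis sorted_sort)
    moreover have "xs!j \<in> set (a # L)" using jy aL by (metis set_sort)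
    ultimately show ?thesis by auto
  qed
  ultimately show ?thesis by simp
qed


lemma proots_lin_prod: "proots (\<Prod>a\<leftarrow>xs. [:- a, 1:]) = mset (xs::real list)"
proof (induct xs)
  case (Cons a xs)
  have nz: "(\<Prod>a\<leftarrow>xs. [:- a, 1:]) \<noteq> (0 :: real poly)"
  proof -
    have "[:- a, 1:] \<noteq> (0::real poly)" for a by simp
    thus ?thesis by (auto simp: prod_list_zero_iff)
  qed
  have "proots (\<Prod>b\<leftarrow>a#xs. [:- b, 1:]) = proots [:- a, 1:] + proots (\<Prod>b\<leftarrow>xs. [:- b, 1:])"
    unfolding list.map prod_list.Cons by (rule proots_mult) (use nz in auto)
  thus ?case using Cons proots_linear_factor[of "-a"] by simp
qed simp

lemma diag_mult_vec:
  fixes D :: "real mat"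
  assumes D: "D \<in> carrier_mat n n" and dD: "diagonal_mat D" and y: "y \<in> carrier_vec n" and i: "i < n"
  shows "(D *\<^sub>v y) $ i = D $$ (i,i) * y $ i"
proof -
  have "(D *\<^sub>v y) $ i = (\<Sum>j\<in>{0..<n}. D $$ (i,j) * y $ j)"
    using D y i by (auto simp: scalar_prod_def)
  also have "\<dots> = (\<Sum>j\<in>{0..<n}. if j = i then D $$ (i,i) * y $ i else 0)"
    using dD D i unfolding diagonal_mat_def by (intro sum.cong) auto
  also have "\<dots> = D $$ (i,i) * y $ i" using i by simp
  finally show ?thesis .
qed

lemma cf_bound:
  fixes L :: "real mat"
  assumes L: "L \<in> carrier_mat n n" and sym: "transpose_mat L = L"
    and psd: "\<And>x. x \<in> carrier_vec n \<Longrightarrow> x \<bullet> (L *\<^sub>v x) \<ge> 0"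
    and L1: "L *\<^sub>v vec n (\<lambda>_. 1) = 0\<^sub>v n" and n: "n \<ge> 2"
  defines "ls \<equiv> sorted_list_of_multiset (proots (char_poly L))"
  shows "length ls = n \<and> ls ! 1 \<ge> 0 \<and>
    (\<forall>x. x \<in> carrier_vec n \<longrightarrow> x \<bullet> vec n (\<lambda>_. 1) = 0 \<longrightarrow> ls ! 1 * (x \<bullet> x) \<le> x \<bullet> (L *\<^sub>v x))"
proof -
  obtain U D where U: "U \<in> carrier_mat n n" and D: "D \<in> carrier_mat n n" and dD: "diagonal_mat D"
    and UU: "transpose_mat U * U = 1\<^sub>m n" and UU': "U * transpose_mat U = 1\<^sub>m n"
    and LUD: "L = U * D * transpose_mat U"
    using spectral[OF L sym] by blast
  have UT: "transpose_mat U \<in> carrier_mat n n" using U by auto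
  define mu where "mu = diag_mat D"
  have lmu: "length mu = n" unfolding mu_def diag_mat_def using D by auto
  have mui: "mu ! i = D $$ (i,i)" if "i < n" for i unfolding mu_def diag_mat_def using D that by auto
  have "similar_mat L D" unfolding similar_mat_def similar_mat_wit_def Let_def
    using L U D UT UU UU' LUD by (intro exI[of _ U] exI[of _ "transpose_mat U"]) auto
  hence "char_poly L = char_poly D" by (rule char_poly_similar)
  also have "\<dots> = (\<Prod>a\<leftarrow>mu. [:- a, 1:])" unfolding mu_def
    by (rule char_poly_upper_triangular[OF D]) (use dD D in \<open>auto simp: upper_triangular_def diagonal_mat_def\<close>)
  finally have "proots (char_poly L) = mset mu" using proots_lin_prod by simp
  hence ls: "ls = sort mu" unfolding ls_def by (simp add: sorted_list_of_multiset_mset)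
  have Q: "x \<bullet> (L *\<^sub>v x) = (\<Sum>i<n. D $$ (i,i) * ((transpose_mat U *\<^sub>v x) $ i)^2)"
    if x: "x \<in> carrier_vec n" for x
  proof -
    define y where "y = transpose_mat U *\<^sub>v x"
    have y: "y \<in> carrier_vec n" unfolding y_def using UT x by auto
    have "L *\<^sub>v x = U *\<^sub>v (D *\<^sub>v y)" unfolding LUD y_def using U D UT x
      by (simp add: assoc_mult_mat_vec[of _ n n _ n])
    hence "x \<bullet> (L *\<^sub>v x) = y \<bullet> (D *\<^sub>v y)" using transpose_vec_mult_scalar[OF U _ x, of "D *\<^sub>v y"] D y
      unfolding y_def by auto
    also have "\<dots> = (\<Sum>i<n. D $$ (i,i) * (y $ i)^2)"
      unfolding scalar_prod_def using D y diag_mult_vec[OF D dD y]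
      by (auto simp: power2_eq_square lessThan_atLeast0 intro!: sum.cong)
    finally show ?thesis unfolding y_def .
  qed
  have N: "x \<bullet> x = (\<Sum>i<n. ((transpose_mat U *\<^sub>v x) $ i)^2)" if x: "x \<in> carrier_vec n" for x
  proof -
    define y where "y = transpose_mat U *\<^sub>v x"
    have y: "y \<in> carrier_vec n" unfolding y_def using UT x by auto
    have "y \<bullet> y = x \<bullet> (U *\<^sub>v y)" using transpose_vec_mult_scalar[OF U y x] unfolding y_def by simp
    also have "U *\<^sub>v y = (U * transpose_mat U) *\<^sub>v x" unfolding y_def using U UT x
      by (simp add: assoc_mult_mat_vec[of _ n n _ n])
    also have "\<dots> = x" using UU' x by simp
    finally have "x \<bullet> x = y \<bullet> y" by simp
    moreover have "y \<bullet> y = (\<Sum>i<n. (y $ i)^2)" unfolding scalar_prod_def using y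
      by (simp add: power2_eq_square lessThan_atLeast0)
    ultimately show ?thesis by (simp only: y_def)
  qed
  have mu_nn: "mu ! i \<ge> 0" if i: "i < n" for i
  proof -
    define x where "x = U *\<^sub>v unit_vec n i"
    have x: "x \<in> carrier_vec n" unfolding x_def using U by auto
    have y: "transpose_mat U *\<^sub>v x = unit_vec n i" unfolding x_def using U UT UU
      by (simp add: assoc_mult_mat_vec[of _ n n _ n, symmetric])
    have "x \<bullet> (L *\<^sub>v x) = (\<Sum>k<n. D $$ (k,k) * ((unit_vec n i) $ k)^2)" using Q[OF x] y by simp
    also have "\<dots> = (\<Sum>k<n. if k = i then D $$ (i,i) else 0)"
      by (intro sum.cong) (auto simp: unit_vec_def)
    also have "\<dots> = D $$ (i,i)" using i by simp
    finally show ?thesis using psd[OF x] mui[OF i] by simp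
  qed
  obtain i0 where i0: "i0 < n" and mn: "\<forall>k<n. mu ! i0 \<le> mu ! k"
  proof -
    have "finite ((!) mu ` {0..<n})" "(!) mu ` {0..<n} \<noteq> {}" using n by auto
    then obtain i0 where "i0 \<in> {0..<n}" "mu ! i0 = Min ((!) mu ` {0..<n})"
      by (metis (no_types, lifting) Min_in imageE)
    thus ?thesis using that by (metis Min_le \<open>finite _\<close> atLeastLessThan_iff image_eqI zero_le)
  qed
  define lam where "lam = ls ! 1"
  have lam_le: "lam \<le> mu ! j" if "j < n" "j \<noteq> i0" for j
    unfolding lam_def ls using sort_second_le[of i0 mu j] i0 mn lmu that by auto
  have lam_nn: "lam \<ge> 0"
  proof -
    have "1 < length (sort mu)" using lmu n by simp
    hence "lam \<in> set (sort mu)" unfolding lam_def ls by (rule nth_mem)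
    thus ?thesis using mu_nn lmu by (auto simp: in_set_conv_nth)
  qed
  have G: "lam * (w \<bullet> w) \<le> w \<bullet> (L *\<^sub>v w)" if w: "w \<in> carrier_vec n" and w0: "(transpose_mat U *\<^sub>v w) $ i0 = 0" for w
  proof -
    have "lam * (w \<bullet> w) = (\<Sum>i<n. lam * ((transpose_mat U *\<^sub>v w) $ i)^2)"
      unfolding N[OF w] by (simp add: sum_distrib_left)
    also have "\<dots> \<le> (\<Sum>i<n. D $$ (i,i) * ((transpose_mat U *\<^sub>v w) $ i)^2)"
    proof (rule sum_mono)
      fix i assume "i \<in> {..<n}"
      hence i: "i < n" by auto
      show "lam * ((transpose_mat U *\<^sub>v w) $ i)^2 \<le> D $$ (i,i) * ((transpose_mat U *\<^sub>v w) $ i)^2"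
      proof (cases "i = i0")
        case True thus ?thesis using w0 by simp
      next
        case False thus ?thesis using lam_le[OF i False] mui[OF i] by (intro mult_right_mono) auto
      qed
    qed
    also have "\<dots> = w \<bullet> (L *\<^sub>v w)" using Q[OF w] by simp
    finally show ?thesis .
  qed
  define one where "one = vec n (\<lambda>_. 1::real)"
  have one: "one \<in> carrier_vec n" unfolding one_def by auto
  have oneone: "one \<bullet> one = real n" unfolding one_def scalar_prod_def by simp
  have main: "lam * (x \<bullet> x) \<le> x \<bullet> (L *\<^sub>v x)" if x: "x \<in> carrier_vec n" and x1: "x \<bullet> one = 0" for x
  proof -
    define z where "z = (transpose_mat U *\<^sub>v one) $ i0"
    define y where "y = (transpose_mat U *\<^sub>v x) $ i0"
    show ?thesis
    proof (cases "z = 0")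
      case True
      have "lam * (one \<bullet> one) \<le> one \<bullet> (L *\<^sub>v one)" using G[OF one] True unfolding z_def by simp
      also have "\<dots> = 0" using L1 unfolding one_def by simp
      finally have "lam \<le> 0" using oneone n by (simp add: mult_le_0_iff)
      hence "lam = 0" using lam_nn by simp
      thus ?thesis using psd[OF x] by simp
    next
      case False
      define w where "w = z \<cdot>\<^sub>v x - y \<cdot>\<^sub>v one"
      have w: "w \<in> carrier_vec n" unfolding w_def using x one by auto
      have "transpose_mat U *\<^sub>v w = z \<cdot>\<^sub>v (transpose_mat U *\<^sub>v x) - y \<cdot>\<^sub>v (transpose_mat U *\<^sub>v one)"
        unfolding w_def using UT x one by (simp add: mult_minus_distrib_mat_vec mult_mat_vec)
      hence w0: "(transpose_mat U *\<^sub>v w) $ i0 = 0" unfolding z_def y_def using i0 UT x one by simp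
      have Lone: "L *\<^sub>v one = 0\<^sub>v n" using L1 unfolding one_def .
      have Lw: "L *\<^sub>v w = z \<cdot>\<^sub>v (L *\<^sub>v x)" unfolding w_def using L x one Lone
        by (simp add: mult_minus_distrib_mat_vec mult_mat_vec, intro eq_vecI, insert L x, auto)
      have oneLx: "one \<bullet> (L *\<^sub>v x) = 0"
      proof -
        have "one \<bullet> (L *\<^sub>v x) = (transpose_mat L *\<^sub>v one) \<bullet> x"
          using transpose_vec_mult_scalar[OF L x one] by simp
        thus ?thesis using sym Lone x by simp
      qed
      have Lx: "L *\<^sub>v x \<in> carrier_vec n" using L x by auto
      have wLw: "w \<bullet> (L *\<^sub>v w) = z^2 * (x \<bullet> (L *\<^sub>v x))"
        using x one Lx oneLx by (subst Lw, unfold w_def, simp add: minus_scalar_prod_distrib power2_eq_square)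
      have ww: "w \<bullet> w = z^2 * (x \<bullet> x) + y^2 * real n" unfolding w_def
        using x one x1 oneone comm_scalar_prod[OF x one]
        by (simp add: minus_scalar_prod_distrib scalar_prod_minus_distrib power2_eq_square algebra_simps)
      have "lam * (z^2 * (x \<bullet> x)) \<le> lam * (w \<bullet> w)" unfolding ww using lam_nn
        by (intro mult_left_mono) auto
      also have "\<dots> \<le> z^2 * (x \<bullet> (L *\<^sub>v x))" using G[OF w w0] wLw by simp
      finally have "z^2 * (lam * (x \<bullet> x)) \<le> z^2 * (x \<bullet> (L *\<^sub>v x))" by (simp add: algebra_simps)
      thus ?thesis using False by simp
    qed
  qed
  show ?thesis using main lam_nn unfolding lam_def one_def ls using lmu by (simp add: length_sort)
qed



lemma distinct_path:
  assumes "R\<^sup>*\<^sup>* a b"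
  shows "\<exists>ps. ps \<noteq> [] \<and> hd ps = a \<and> last ps = b \<and> distinct ps \<and>
     (\<forall>i. Suc i < length ps \<longrightarrow> R (ps ! i) (ps ! Suc i)) \<and> set ps \<subseteq> {x. R\<^sup>*\<^sup>* a x}"
  using assms
proof (induct rule: rtranclp_induct)
  case base
  show ?case by (intro exI[of _ "[a]"]) auto
next
  case (step b c)
  then obtain ps where ps: "ps \<noteq> []" "hd ps = a" "last ps = b" "distinct ps"
    "\<forall>i. Suc i < length ps \<longrightarrow> R (ps ! i) (ps ! Suc i)" "set ps \<subseteq> {x. R\<^sup>*\<^sup>* a x}" by blast
  show ?case
  proof (cases "c \<in> set ps")
    case True
    then obtain xs ys where xy: "ps = xs @ c # ys" by (metis split_list)
    let ?qs = "xs @ [c]"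
    have eq: "?qs ! i = ps ! i" if "i < length ?qs" for i
      using that unfolding xy by (auto simp: nth_append)
    have edges: "\<forall>i. Suc i < length ?qs \<longrightarrow> R (?qs ! i) (?qs ! Suc i)"
    proof (intro allI impI)
      fix i assume i: "Suc i < length ?qs"
      have "Suc i < length ps" using i unfolding xy by auto
      thus "R (?qs ! i) (?qs ! Suc i)" using ps(5) eq[of i] eq[of "Suc i"] i by auto
    qed
    have "hd ?qs = a" using ps(2) unfolding xy by (cases xs) auto
    moreover have "distinct ?qs" using ps(4) unfolding xy by auto
    moreover have "set ?qs \<subseteq> {x. R\<^sup>*\<^sup>* a x}" using ps(6) unfolding xy by auto
    ultimately show ?thesis using edges by (intro exI[of _ ?qs]) auto
  next
    case False
    let ?qs = "ps @ [c]"
    have edges: "\<forall>i. Suc i < length ?qs \<longrightarrow> R (?qs ! i) (?qs ! Suc i)"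
    proof (intro allI impI)
      fix i assume i: "Suc i < length ?qs"
      show "R (?qs ! i) (?qs ! Suc i)"
      proof (cases "Suc i < length ps")
        case True thus ?thesis using ps(5) by (auto simp: nth_append)
      next
        case False
        hence "Suc i = length ps" using i by auto
        moreover have "ps ! i = last ps" using ps(1) \<open>Suc i = length ps\<close> by (simp add: last_conv_nth del: One_nat_def) (metis diff_Suc_1)
        ultimately show ?thesis using ps(3) step(2) by (auto simp: nth_append)
      qed
    qed
    have "hd ?qs = a" using ps(1,2) by auto
    moreover have "distinct ?qs" using ps(4) False by auto
    moreover have "set ?qs \<subseteq> {x. R\<^sup>*\<^sup>* a x}" using ps(6) step(1,2) by auto
    ultimately show ?thesis using edges by (intro exI[of _ ?qs]) auto
  qed
qed


locale tdec =
  fixes n :: nat and E :: "nat \<Rightarrow> nat \<Rightarrow> bool" and m :: nat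
    and F :: "nat \<Rightarrow> nat \<Rightarrow> bool" and B :: "nat \<Rightarrow> nat set"
  assumes td: "tree_decomposition n E m F B"
begin

lemma bags: "t < m \<Longrightarrow> B t \<subseteq> {0..<n}" using td unfolding tree_decomposition_def by auto
lemma cov: "v < n \<Longrightarrow> \<exists>t<m. v \<in> B t" using td unfolding tree_decomposition_def by auto
lemma edge: "E u v \<Longrightarrow> \<exists>t<m. u \<in> B t \<and> v \<in> B t" using td unfolding tree_decomposition_def by auto
lemma conn: "v < n \<Longrightarrow> connected_on F {t. t < m \<and> v \<in> B t}" using td unfolding tree_decomposition_def by auto
lemma tree: "is_tree m F" using td unfolding tree_decomposition_def by auto
lemma Fsym: "F a b \<Longrightarrow> F b a" using tree unfolding is_tree_def simple_graph_def by auto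
lemma Firr: "\<not> F a a" using tree unfolding is_tree_def simple_graph_def by auto
lemma Flt: "F a b \<Longrightarrow> a < m \<and> b < m" using tree unfolding is_tree_def simple_graph_def by auto
lemma nocyc: "\<not> is_cycle F cs" using tree unfolding is_tree_def by auto
lemma m1: "m \<ge> 1" using tree unfolding is_tree_def by auto
lemma tconn: "a < m \<Longrightarrow> b < m \<Longrightarrow> (\<lambda>x y. F x y \<and> x \<in> {0..<m} \<and> y \<in> {0..<m})\<^sup>*\<^sup>* a b"
  using tree unfolding is_tree_def connected_on_def by auto

definition Fm :: "nat \<Rightarrow> nat \<Rightarrow> nat \<Rightarrow> bool" where "Fm t a b \<longleftrightarrow> F a b \<and> a \<noteq> t \<and> b \<noteq> t"
definition side :: "nat \<Rightarrow> nat \<Rightarrow> nat set" where "side t' t = {r. (Fm t)\<^sup>*\<^sup>* t' r}"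

lemma Fm_sym_rt: "(Fm t)\<^sup>*\<^sup>* a b \<Longrightarrow> (Fm t)\<^sup>*\<^sup>* b a"
proof (induct rule: rtranclp_induct)
  case (step b c)
  have "Fm t c b" using step(2) Fsym unfolding Fm_def by auto
  thus ?case using step(3) by (rule converse_rtranclp_into_rtranclp)
qed simp

lemma Fm_avoid: "(Fm t)\<^sup>*\<^sup>* a b \<Longrightarrow> a \<noteq> t \<Longrightarrow> b \<noteq> t"
  by (induct rule: rtranclp_induct) (auto simp: Fm_def)

lemma Fm_lt: "(Fm t)\<^sup>*\<^sup>* a b \<Longrightarrow> a < m \<Longrightarrow> b < m"
  by (induct rule: rtranclp_induct) (auto simp: Fm_def dest: Flt)

lemma AC: assumes t1: "F t t1" and t2: "F t t2" and ne: "t1 \<noteq> t2" and p: "(Fm t)\<^sup>*\<^sup>* t1 t2"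
  shows False
proof -
  obtain ps where ps: "ps \<noteq> []" "hd ps = t1" "last ps = t2" "distinct ps"
    "\<forall>i. Suc i < length ps \<longrightarrow> Fm t (ps ! i) (ps ! Suc i)" "set ps \<subseteq> {x. (Fm t)\<^sup>*\<^sup>* t1 x}"
    using distinct_path[OF p] by blast
  have t1t: "t1 \<noteq> t" using t1 Firr by auto
  have tnot: "t \<notin> set ps" using ps(6) Fm_avoid[OF _ t1t] by auto
  have len: "length ps \<ge> 2"
  proof (rule ccontr)
    assume "\<not> 2 \<le> length ps"
    moreover have "length ps \<noteq> 0" using ps(1) by auto
    ultimately have "length ps = 1" by linarith
    then obtain x where "ps = [x]" by (cases ps) auto
    thus False using ps(2,3) ne by auto
  qed
  let ?cs = "t # ps"
  have "is_cycle F ?cs"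
    unfolding is_cycle_def
  proof (intro conjI allI impI)
    show "3 \<le> length ?cs" using len by simp
    show "distinct ?cs" using ps(4) tnot by simp
    fix i assume i: "Suc i < length ?cs"
    show "F (?cs ! i) (?cs ! Suc i)"
    proof (cases i)
      case 0 thus ?thesis using t1 ps(1,2) by (cases ps) auto
    next
      case (Suc j)
      hence "Suc j < length ps" using i by auto
      thus ?thesis using ps(5) Suc unfolding Fm_def by auto
    qed
  next
    show "F (last ?cs) (hd ?cs)" using ps(1,3) t2 Fsym by auto
  qed
  thus False using nocyc by auto
qed

lemma U1: assumes "F t t1" "F t t2" "r \<in> side t1 t" "r \<in> side t2 t" shows "t1 = t2"
proof (rule ccontr)
  assume ne: "t1 \<noteq> t2"
  have a: "(Fm t)\<^sup>*\<^sup>* t1 r" and b: "(Fm t)\<^sup>*\<^sup>* t2 r" using assms unfolding side_def by auto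
  have "(Fm t)\<^sup>*\<^sup>* t1 t2" using rtranclp_trans[OF a Fm_sym_rt[OF b]] .
  thus False using AC[OF assms(1,2) ne] by auto
qed

lemma C: assumes t: "t < m" and r: "r < m" and rt: "r \<noteq> t"
  shows "\<exists>t'. F t t' \<and> r \<in> side t' t"
proof -
  have "(\<lambda>x y. F x y \<and> x \<in> {0..<m} \<and> y \<in> {0..<m})\<^sup>*\<^sup>* t r" using tconn t r by auto
  hence "r = t \<or> (\<exists>t'. F t t' \<and> (Fm t)\<^sup>*\<^sup>* t' r)"
  proof (induct rule: rtranclp_induct)
    case (step x y)
    show ?case
    proof (cases "y = t")
      case False
      from step(3) show ?thesis
      proof
        assume "x = t" thus ?thesis using step(2) by auto
      next
        assume "\<exists>t'. F t t' \<and> (Fm t)\<^sup>*\<^sup>* t' x"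
        then obtain t' where "F t t'" "(Fm t)\<^sup>*\<^sup>* t' x" by auto
        moreover have "x \<noteq> t" using Fm_avoid[OF \<open>(Fm t)\<^sup>*\<^sup>* t' x\<close>] \<open>F t t'\<close> Firr by auto
        moreover have "Fm t x y" using step(2) False \<open>x \<noteq> t\<close> unfolding Fm_def by auto
        ultimately show ?thesis using rtranclp.rtrancl_into_rtrancl by fast
      qed
    qed simp
  qed simp
  thus ?thesis using rt unfolding side_def by auto
qed

lemma Lv: assumes v: "v \<notin> B t" "v < n" and r: "r1 < m" "r2 < m" "v \<in> B r1" "v \<in> B r2"
  and s: "r1 \<in> side t' t"
  shows "r2 \<in> side t' t"
proof -
  let ?K = "{t. t < m \<and> v \<in> B t}"
  have "(\<lambda>x y. F x y \<and> x \<in> ?K \<and> y \<in> ?K)\<^sup>*\<^sup>* r1 r2" using conn[OF v(2)] r unfolding connected_on_def by auto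
  hence "(Fm t)\<^sup>*\<^sup>* r1 r2"
    by (induct rule: rtranclp_induct) (use v in \<open>auto simp: Fm_def intro: rtranclp.rtrancl_into_rtrancl\<close>)
  thus ?thesis using s unfolding side_def by auto
qed

definition branch :: "nat \<Rightarrow> nat \<Rightarrow> nat set" where
  "branch t t' = {v. v < n \<and> v \<notin> B t \<and> (\<exists>r\<in>side t' t. r < m \<and> v \<in> B r)}"

lemma K1: assumes "t < m" "v < n" "v \<notin> B t" shows "\<exists>t'. F t t' \<and> v \<in> branch t t'"
proof -
  obtain r where r: "r < m" "v \<in> B r" using cov assms by auto
  hence "r \<noteq> t" using assms by auto
  then obtain t' where "F t t'" "r \<in> side t' t" using C assms r by blast
  thus ?thesis using r assms unfolding branch_def by auto
qed

lemma K2: assumes "F t t1" "F t t2" "v \<in> branch t t1" "v \<in> branch t t2" shows "t1 = t2"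
proof -
  obtain r1 where r1: "r1 \<in> side t1 t" "r1 < m" "v \<in> B r1" and v: "v < n" "v \<notin> B t"
    using assms unfolding branch_def by auto
  obtain r2 where r2: "r2 \<in> side t2 t" "r2 < m" "v \<in> B r2" using assms unfolding branch_def by auto
  have "r2 \<in> side t1 t" using Lv[OF v(2) v(1) r1(2) r2(2) r1(3) r2(3) r1(1)] .
  thus ?thesis using U1 assms(1,2) r2(1) by auto
qed

lemma K3: assumes e: "E u v" and t: "t < m" "F t t1" "F t t2" and b: "u \<in> branch t t1" "v \<in> branch t t2"
  shows "t1 = t2"
proof -
  obtain r where r: "r < m" "u \<in> B r" "v \<in> B r" using edge[OF e] by auto
  have "r \<noteq> t" using b r unfolding branch_def by auto
  then obtain t3 where t3: "F t t3" "r \<in> side t3 t" using C t r by blast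
  have "u \<in> branch t t3" "v \<in> branch t t3" using b r t3 unfolding branch_def by auto
  thus ?thesis using K2 t t3 b by metis
qed

lemma AC2: assumes tt: "F t t'" and r1: "r \<in> side t t'" and r2: "r \<in> side t' t" shows False
proof -
  have "(Fm t')\<^sup>*\<^sup>* t r" using r1 unfolding side_def by auto
  hence "r = t \<or> (\<exists>t''. F t t'' \<and> t'' \<noteq> t' \<and> r \<in> side t'' t)"
  proof (induct rule: rtranclp_induct)
    case (step x y)
    show ?case
    proof (cases "y = t")
      case False
      from step(3) show ?thesis
      proof
        assume "x = t" thus ?thesis using step(2) unfolding Fm_def side_def by auto
      next
        assume "\<exists>t''. F t t'' \<and> t'' \<noteq> t' \<and> x \<in> side t'' t"
        then obtain t'' where t'': "F t t''" "t'' \<noteq> t'" "(Fm t)\<^sup>*\<^sup>* t'' x" unfolding side_def by auto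
        moreover have "x \<noteq> t" using Fm_avoid[OF t''(3)] t'' Firr by auto
        moreover have "Fm t x y" using step(2) False \<open>x \<noteq> t\<close> unfolding Fm_def by auto
        ultimately show ?thesis unfolding side_def using rtranclp.rtrancl_into_rtrancl by fast
      qed
    qed simp
  qed simp
  moreover have "r \<noteq> t" using r2 Fm_avoid[of t t' r] tt Firr unfolding side_def by auto
  ultimately obtain t'' where "F t t''" "t'' \<noteq> t'" "r \<in> side t'' t" by auto
  thus False using U1 tt r2 by auto
qed

lemma NC: assumes tt: "F t t'" and r: "r < m" shows "r \<in> side t t' \<or> r \<in> side t' t"
proof (cases "r = t")
  case True thus ?thesis unfolding side_def by auto
next
  case False
  have t: "t < m" using Flt tt by auto
  obtain t'' where t'': "F t t''" "r \<in> side t'' t" using C[OF t r False] by auto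
  show ?thesis
  proof (cases "t'' = t'")
    case True thus ?thesis using t'' by auto
  next
    case ne: False
    have "(Fm t)\<^sup>*\<^sup>* t'' r" using t'' unfolding side_def by auto
    hence "r \<noteq> t' \<and> (Fm t')\<^sup>*\<^sup>* t'' r"
    proof (induct rule: rtranclp_induct)
      case base thus ?case using ne by auto
    next
      case (step x y)
      have "y \<noteq> t'"
      proof
        assume "y = t'"
        hence "(Fm t)\<^sup>*\<^sup>* t'' t'" using step(1,2) by auto
        thus False using AC[OF t''(1) tt ne] by auto
      qed
      moreover have "Fm t' x y" using step \<open>y \<noteq> t'\<close> unfolding Fm_def by auto
      ultimately show ?case using step(3) by (meson rtranclp.rtrancl_into_rtrancl)
    qed
    moreover have "Fm t' t t''" using t'' ne tt Firr unfolding Fm_def by auto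
    ultimately have "(Fm t')\<^sup>*\<^sup>* t r" by (meson converse_rtranclp_into_rtranclp)
    thus ?thesis unfolding side_def by auto
  qed
qed

end



context tdec begin

definition heavy :: "nat \<Rightarrow> nat \<Rightarrow> bool" where
  "heavy t t' \<longleftrightarrow> 2 * card (branch t t') > n - card (B t)"

definition good :: "nat set \<Rightarrow> (nat \<Rightarrow> nat) \<Rightarrow> bool" where
  "good S cl \<longleftrightarrow> (\<exists>t<m. S \<subseteq> B t) \<and> (\<forall>v. cl v < 3) \<and>
     (\<forall>u v. E u v \<longrightarrow> u \<notin> S \<longrightarrow> v \<notin> S \<longrightarrow> cl u = cl v) \<and>
     (\<forall>i<3. 2 * card {v. v < n \<and> v \<notin> S \<and> cl v = i} \<le> n - card S)"

lemma edge_lt: "E u v \<Longrightarrow> u < n \<and> v < n"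
  using edge bags by fastforce

lemma branch_sub: "branch t t' \<subseteq> {0..<n}" unfolding branch_def by auto

lemma all_side: assumes "v \<in> branch t t'" "r < m" "v \<in> B r" shows "r \<in> side t' t"
proof -
  obtain r1 where "r1 \<in> side t' t" "r1 < m" "v \<in> B r1" "v < n" "v \<notin> B t"
    using assms(1) unfolding branch_def by auto
  thus ?thesis using Lv assms by blast
qed

lemma caseB: assumes tt: "F t t'" and hv: "heavy t t'"
  and ab: "card (branch t' t) \<ge> card (branch t t')"
  shows "\<exists>S cl. good S cl"
proof -
  have t: "t < m" and t': "t' < m" using Flt tt by auto
  have tt': "F t' t" using Fsym tt .
  define Rt where "Rt = branch t' t"
  define Rt' where "Rt' = branch t t'"
  define X where "X = B t \<inter> B t'"
  define U where "U = B t - B t'"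
  define a where "a = card Rt"
  define b where "b = card Rt'"
  have fin: "finite Rt" "finite Rt'" unfolding Rt_def Rt'_def using branch_sub finite_subset by blast+
  have Bt: "B t \<subseteq> {0..<n}" using bags t by auto
  have tside: "t \<in> side t t'" "t' \<in> side t' t" unfolding side_def by auto
  have UR: "U \<subseteq> Rt" unfolding U_def Rt_def branch_def using Bt tside t by auto
  have finU: "finite U" using UR fin finite_subset by auto
  have disj: "Rt \<inter> Rt' = {}"
  proof (rule ccontr)
    assume "Rt \<inter> Rt' \<noteq> {}"
    then obtain v where v: "v \<in> Rt" "v \<in> Rt'" by auto
    then obtain r where "r \<in> side t t'" "r < m" "v \<in> B r" unfolding Rt_def branch_def by auto
    moreover hence "r \<in> side t' t" using all_side v(2) unfolding Rt'_def by auto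
    ultimately show False using AC2[OF tt] by auto
  qed
  have noedge: "\<not> E u v" if "u \<in> Rt" "v \<in> Rt'" for u v
  proof
    assume e: "E u v"
    obtain r where r: "r < m" "u \<in> B r" "v \<in> B r" using edge[OF e] by auto
    have "r \<in> side t t'" using all_side[of u t' t r] that r unfolding Rt_def by auto
    moreover have "r \<in> side t' t" using all_side[of v t t' r] that r unfolding Rt'_def by auto
    ultimately show False using AC2[OF tt] by auto
  qed
  have noedge': "\<not> E v u" if "u \<in> Rt" "v \<in> Rt'" for u v
  proof
    assume e: "E v u"
    obtain r where r: "r < m" "u \<in> B r" "v \<in> B r" using edge[OF e] by auto
    have "r \<in> side t t'" using all_side[of u t' t r] that r unfolding Rt_def by auto
    moreover have "r \<in> side t' t" using all_side[of v t t' r] that r unfolding Rt'_def by auto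
    ultimately show False using AC2[OF tt] by auto
  qed
  have coverX: "v \<in> Rt \<or> v \<in> Rt'" if v: "v < n" "v \<notin> X" for v
  proof (cases "v \<in> B t'")
    case False
    show ?thesis
    proof (cases "v \<in> B t")
      case True thus ?thesis using False v t tside unfolding Rt_def branch_def by auto
    next
      case nt: False
      obtain r where r: "r < m" "v \<in> B r" using cov v by auto
      from NC[OF tt r(1)] show ?thesis
        using r v False nt unfolding Rt_def Rt'_def branch_def by auto
    qed
  next
    case True
    hence "v \<notin> B t" using v unfolding X_def by auto
    thus ?thesis using True v t' tside unfolding Rt'_def branch_def by auto
  qed
  have outt: "{0..<n} - B t = (Rt - U) \<union> Rt'"
  proof
    show "{0..<n} - B t \<subseteq> (Rt - U) \<union> Rt'"
    proof
      fix v assume v: "v \<in> {0..<n} - B t"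
      hence "v \<notin> X" "v \<notin> U" unfolding X_def U_def by auto
      thus "v \<in> (Rt - U) \<union> Rt'" using coverX[of v] v by auto
    qed
    show "(Rt - U) \<union> Rt' \<subseteq> {0..<n} - B t"
      unfolding Rt_def Rt'_def U_def branch_def by auto
  qed
  have "n - card (B t) = card ({0..<n} - B t)" using Bt by (simp add: card_Diff_subset finite_subset)
  also have "\<dots> = card (Rt - U) + b" unfolding outt b_def
    by (rule card_Un_disjoint) (use fin disj in auto)
  also have "card (Rt - U) = a - card U" unfolding a_def using UR finU by (simp add: card_Diff_subset)
  finally have Nt: "n - card (B t) = a - card U + b" .
  have "card U \<le> a" unfolding a_def using UR fin card_mono by auto
  have "2 * b > n - card (B t)" using hv unfolding heavy_def b_def Rt'_def by auto
  hence "a - b \<le> card U" using Nt \<open>card U \<le> a\<close> by linarith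
  then obtain U' where U': "U' \<subseteq> U" "card U' = a - b" "finite U'" by (rule obtain_subset_with_card_n)
  define S where "S = X \<union> U'"
  define cl where "cl v = (if v \<in> Rt then 0 else (1::nat))" for v
  have SB: "S \<subseteq> B t" unfolding S_def X_def using U' unfolding U_def by auto
  have C0: "{v. v < n \<and> v \<notin> S \<and> cl v = 0} = Rt - U'"
  proof -
    have "Rt \<subseteq> {0..<n}" unfolding Rt_def using branch_sub by auto
    moreover have "Rt \<inter> X = {}" unfolding Rt_def X_def branch_def by auto
    ultimately show ?thesis unfolding cl_def S_def by auto
  qed
  have C1: "{v. v < n \<and> v \<notin> S \<and> cl v = 1} = Rt'"
  proof
    show "{v. v < n \<and> v \<notin> S \<and> cl v = 1} \<subseteq> Rt'"
    proof
      fix v assume v: "v \<in> {v. v < n \<and> v \<notin> S \<and> cl v = 1}"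
      hence "v \<notin> X" "v \<notin> Rt" unfolding S_def cl_def by (auto split: if_splits)
      thus "v \<in> Rt'" using coverX v by auto
    qed
    show "Rt' \<subseteq> {v. v < n \<and> v \<notin> S \<and> cl v = 1}"
      using disj SB branch_sub unfolding Rt'_def cl_def branch_def by fastforce
  qed
  have C2: "{v. v < n \<and> v \<notin> S \<and> cl v = 2} = {}" unfolding cl_def by auto
  have cC0: "card (Rt - U') = b" using U' UR ab unfolding a_def b_def Rt_def Rt'_def
    by (subst card_Diff_subset) auto
  have "{0..<n} - S = {v. v < n \<and> v \<notin> S \<and> cl v = 0} \<union> {v. v < n \<and> v \<notin> S \<and> cl v = 1}"
    unfolding cl_def by auto
  hence "{0..<n} - S = (Rt - U') \<union> Rt'" unfolding C0 C1 .
  moreover have "card ((Rt - U') \<union> Rt') = card (Rt - U') + card Rt'"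
    by (rule card_Un_disjoint) (use fin disj in auto)
  ultimately have "card ({0..<n} - S) = b + b" using cC0 b_def by simp
  moreover have "card ({0..<n} - S) = n - card S" using SB Bt by (simp add: card_Diff_subset finite_subset)
  ultimately have NS: "n - card S = 2 * b" by simp
  have "good S cl" unfolding good_def
  proof (intro conjI allI impI)
    show "\<exists>t<m. S \<subseteq> B t" using SB t by auto
    fix v show "cl v < 3" unfolding cl_def by auto
  next
    fix u v assume e: "E u v" and uS: "u \<notin> S" and vS: "v \<notin> S"
    have uv: "u < n" "v < n" using edge_lt[OF e] by auto
    show "cl u = cl v"
    proof (rule ccontr)
      assume ne: "cl u \<noteq> cl v"
      show False
      proof (cases "u \<in> Rt")
        case True
        hence "v \<notin> Rt" using ne unfolding cl_def by auto
        hence "v \<in> {v. v < n \<and> v \<notin> S \<and> cl v = 1}" using uv vS unfolding cl_def by auto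
        hence "v \<in> Rt'" using C1 by auto
        thus False using noedge[OF True] e by auto
      next
        case False
        hence "v \<in> Rt" using ne unfolding cl_def by (auto split: if_splits)
        have "u \<in> {v. v < n \<and> v \<notin> S \<and> cl v = 1}" using uv uS False unfolding cl_def by auto
        hence "u \<in> Rt'" using C1 by auto
        thus False using noedge'[OF \<open>v \<in> Rt\<close>] e by auto
      qed
    qed
  next
    fix i :: nat assume "i < 3"
    hence "i = 0 \<or> i = 1 \<or> i = 2" by auto
    moreover have "2 * card {v. v < n \<and> v \<notin> S \<and> cl v = 0} \<le> n - card S" unfolding C0 cC0 NS by simp
    moreover have "2 * card {v. v < n \<and> v \<notin> S \<and> cl v = 1} \<le> n - card S" unfolding C1 NS b_def by simp
    moreover have "2 * card {v. v < n \<and> v \<notin> S \<and> cl v = 2} \<le> n - card S" unfolding C2 by simp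
    ultimately show "2 * card {v. v < n \<and> v \<notin> S \<and> cl v = i} \<le> n - card S" by blast
  qed
  thus ?thesis by auto
qed


lemma caseA: assumes t: "t < m" and nh: "\<forall>t'. F t t' \<longrightarrow> \<not> heavy t t'"
  shows "\<exists>S cl. good S cl"
proof -
  define out where "out = {0..<n} - B t"
  define N where "N = card out"
  have Bt: "B t \<subseteq> {0..<n}" using bags t by auto
  have finout: "finite out" unfolding out_def by auto
  have NB: "n - card (B t) = N" unfolding N_def out_def using Bt by (simp add: card_Diff_subset finite_subset)
  define br where "br v = (SOME t'. F t t' \<and> v \<in> branch t t')" for v
  have brp: "F t (br v) \<and> v \<in> branch t (br v)" if "v \<in> out" for v
  proof -
    have "\<exists>t'. F t t' \<and> v \<in> branch t t'" using K1 t that unfolding out_def by auto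
    thus ?thesis unfolding br_def by (rule someI_ex)
  qed
  have fib: "{v\<in>out. br v = t'} = branch t t'" if tt: "F t t'" for t'
  proof
    show "{v\<in>out. br v = t'} \<subseteq> branch t t'" using brp by auto
    show "branch t t' \<subseteq> {v\<in>out. br v = t'}"
    proof
      fix v assume v: "v \<in> branch t t'"
      hence vo: "v \<in> out" unfolding branch_def out_def by auto
      hence "br v = t'" using K2[OF _ tt _ v] brp by blast
      thus "v \<in> {v\<in>out. br v = t'}" using vo by auto
    qed
  qed
  have fibsmall: "2 * card {v\<in>out. br v = t'} \<le> N" if tt: "F t t'" for t'
  proof -
    have "\<not> heavy t t'" using nh tt by auto
    hence "2 * card (branch t t') \<le> n - card (B t)" unfolding heavy_def by simp
    thus ?thesis using fib[OF tt] NB by simp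
  qed
  define f where "f J = card {v\<in>out. br v \<in> J}" for J
  define Nb where "Nb = {t'. F t t'}"
  have finNb: "finite Nb" unfolding Nb_def by (rule finite_subset[of _ "{0..<m}"]) (use Flt in auto)
  define Cand where "Cand = {J. J \<subseteq> Nb \<and> 2 * f J \<le> N}"
  have finC: "finite Cand" unfolding Cand_def by (rule finite_subset[of _ "Pow Nb"]) (use finNb in auto)
  have eC: "{} \<in> Cand" unfolding Cand_def f_def by auto
  have "Max (f ` Cand) \<in> f ` Cand" by (rule Max_in) (use finC eC in auto)
  then obtain J where J: "J \<in> Cand" "f J = Max (f ` Cand)" by auto
  have Jmax: "f J' \<le> f J" if "J' \<in> Cand" for J'
    using J(2) finC that by (simp add: Max_ge)
  have fle: "f J' \<le> N" for J' unfolding f_def N_def using finout by (intro card_mono) auto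
  have edge_out: "u \<in> out \<and> v \<in> out" if "E u v" "u \<notin> B t" "v \<notin> B t" for u v
    using edge_lt[OF that(1)] that unfolding out_def by auto
  show ?thesis
  proof (cases "\<forall>v\<in>out. br v \<in> J")
    case True
    define cl :: "nat \<Rightarrow> nat" where "cl v = 0" for v
    have "{v. v < n \<and> v \<notin> B t \<and> cl v = 0} = {v\<in>out. br v \<in> J}"
      using True unfolding cl_def out_def by auto
    hence c0: "2 * card {v. v < n \<and> v \<notin> B t \<and> cl v = 0} \<le> n - card (B t)"
      using J(1) NB unfolding Cand_def f_def by auto
    have "good (B t) cl" unfolding good_def
    proof (intro conjI allI impI)
      show "\<exists>t'<m. B t \<subseteq> B t'" using t by auto
      fix i :: nat assume "i < 3"
      show "2 * card {v. v < n \<and> v \<notin> B t \<and> cl v = i} \<le> n - card (B t)"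
        using c0 by (cases "i = 0") (auto simp: cl_def)
    qed (auto simp: cl_def)
    thus ?thesis by auto
  next
    case False
    then obtain v0 where v0: "v0 \<in> out" "br v0 \<notin> J" by auto
    define t0 where "t0 = br v0"
    have tt0: "F t t0" using brp[OF v0(1)] unfolding t0_def by auto
    have t0J: "t0 \<notin> J" using v0 unfolding t0_def by auto
    define J' where "J' = insert t0 J"
    have J'Nb: "J' \<subseteq> Nb" using J(1) tt0 unfolding J'_def Cand_def Nb_def by auto
    have "{v\<in>out. br v \<in> J'} = {v\<in>out. br v \<in> J} \<union> {v\<in>out. br v = t0}" unfolding J'_def by auto
    hence fJ': "f J' = f J + card {v\<in>out. br v = t0}" unfolding f_def
      using t0J finout by (subst card_Un_disjoint[symmetric]) auto
    have "v0 \<in> {v\<in>out. br v = t0}" using v0 unfolding t0_def by auto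
    moreover have "finite {v\<in>out. br v = t0}" using finout by auto
    ultimately have "card {v\<in>out. br v = t0} > 0" using card_gt_0_iff by blast
    hence "card {v\<in>out. br v = t0} \<ge> 1" by simp
    hence "f J' > f J" using fJ' by auto
    hence "J' \<notin> Cand" using Jmax by force
    hence big: "2 * f J' > N" using J'Nb unfolding Cand_def by auto
    define cl where "cl v = (if br v \<in> J then 0 else if br v = t0 then 1 else (2::nat))" for v
    have c0: "{v. v < n \<and> v \<notin> B t \<and> cl v = 0} = {v\<in>out. br v \<in> J}"
      unfolding cl_def out_def by auto
    have c1: "{v. v < n \<and> v \<notin> B t \<and> cl v = 1} = {v\<in>out. br v = t0}"
      using t0J unfolding cl_def out_def by auto
    have c2: "{v. v < n \<and> v \<notin> B t \<and> cl v = 2} = out - {v\<in>out. br v \<in> J'}"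
      unfolding cl_def out_def J'_def by auto
    have cc2: "card (out - {v\<in>out. br v \<in> J'}) = N - f J'"
      unfolding f_def N_def using finout by (subst card_Diff_subset) auto
    have "good (B t) cl" unfolding good_def
    proof (intro conjI allI impI)
      show "\<exists>t'<m. B t \<subseteq> B t'" using t by auto
      fix v show "cl v < 3" unfolding cl_def by auto
    next
      fix u v assume e: "E u v" and u: "u \<notin> B t" and v: "v \<notin> B t"
      have uo: "u \<in> out" and vo: "v \<in> out" using edge_out[OF e u v] by auto
      have "br u = br v" using K3[OF e t _ _ ] brp[OF uo] brp[OF vo] by blast
      thus "cl u = cl v" unfolding cl_def by simp
    next
      fix i :: nat assume "i < 3"
      hence "i = 0 \<or> i = 1 \<or> i = 2" by auto
      moreover have "2 * card {v. v < n \<and> v \<notin> B t \<and> cl v = 0} \<le> n - card (B t)"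
        unfolding c0 NB using J(1) unfolding Cand_def f_def by auto
      moreover have "2 * card {v. v < n \<and> v \<notin> B t \<and> cl v = 1} \<le> n - card (B t)"
        unfolding c1 NB using fibsmall[OF tt0] .
      moreover have "2 * card {v. v < n \<and> v \<notin> B t \<and> cl v = 2} \<le> n - card (B t)"
        unfolding c2 cc2 NB using big fle[of J'] by linarith
      ultimately show "2 * card {v. v < n \<and> v \<notin> B t \<and> cl v = i} \<le> n - card (B t)" by blast
    qed
    thus ?thesis by auto
  qed
qed

lemma walk: assumes H: "\<forall>t<m. \<exists>t'. F t t' \<and> heavy t t'"
  shows "\<exists>t t'. F t t' \<and> heavy t t' \<and> heavy t' t"
proof (rule ccontr)
  assume nC: "\<not> ?thesis"
  define f where "f t = (SOME t'. F t t' \<and> heavy t t')" for t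
  have fp: "F t (f t) \<and> heavy t (f t)" if "t < m" for t
    unfolding f_def by (rule someI_ex) (use H that in auto)
  have flt: "f t < m" if "t < m" for t using Flt[of t "f t"] fp[OF that] by simp
  have ff: "f (f t) \<noteq> t" if "t < m" for t
  proof
    assume eq: "f (f t) = t"
    have "heavy (f t) t" using fp[OF flt[OF that]] eq by simp
    thus False using nC fp[OF that] by blast
  qed
  define s where "s k = (f ^^ k) 0" for k
  have s_Suc: "s (Suc k) = f (s k)" for k unfolding s_def by simp
  have slt: "s k < m" for k
  proof (induct k)
    case 0 thus ?case using m1 unfolding s_def by simp
  next
    case (Suc k) thus ?case using flt s_Suc[of k] by simp
  qed
  have "\<not> inj_on s {0..m}"
  proof
    assume "inj_on s {0..m}"
    hence "card (s ` {0..m}) = card {0..m}" by (rule card_image)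
    moreover have "card (s ` {0..m}) \<le> card {0..<m}" using slt by (intro card_mono) auto
    ultimately show False by simp
  qed
  then obtain i j where ij: "i \<noteq> j" "s i = s j" unfolding inj_on_def by blast
  have ex: "\<exists>j. \<exists>i<j. s i = s j"
  proof (cases "i < j")
    case True thus ?thesis using ij by blast
  next
    case False hence "j < i" using ij by auto
    thus ?thesis using ij by (intro exI[of _ i] exI[of _ j]) auto
  qed
  define j0 where "j0 = (LEAST j. \<exists>i<j. s i = s j)"
  obtain i0 where i0: "i0 < j0" "s i0 = s j0" using LeastI_ex[OF ex] unfolding j0_def by blast
  have mini: "s a \<noteq> s b" if "a < b" "b < j0" for a b
    using not_less_Least[of b "\<lambda>j. \<exists>i<j. s i = s j"] that unfolding j0_def by blast
  define cs where "cs = map s [i0..<j0]"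
  have lcs: "length cs = j0 - i0" unfolding cs_def by simp
  have csk: "cs ! k = s (i0 + k)" if "k < j0 - i0" for k unfolding cs_def using that by simp
  have "is_cycle F cs" unfolding is_cycle_def
  proof (intro conjI allI impI)
    show "distinct cs" unfolding cs_def distinct_map
    proof
      show "inj_on s (set [i0..<j0])" unfolding inj_on_def
      proof (intro ballI impI)
        fix a b assume a: "a \<in> set [i0..<j0]" and b: "b \<in> set [i0..<j0]" and e: "s a = s b"
        show "a = b"
        proof (rule ccontr)
          assume "a \<noteq> b"
          hence "a < b \<or> b < a" by auto
          thus False using mini[of a b] mini[of b a] a b e by auto
        qed
      qed
    qed simp
    fix k assume k: "Suc k < length cs"
    have "cs ! k = s (i0 + k)" using csk[of k] k lcs by simp
    moreover have "cs ! Suc k = f (s (i0 + k))" using csk[of "Suc k"] k lcs s_Suc[of "i0 + k"] by simp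
    ultimately show "F (cs ! k) (cs ! Suc k)" using fp[OF slt[of "i0 + k"]] by simp
  next
    have "last cs = s (j0 - 1)" using i0 lcs csk[of "j0 - i0 - 1"] unfolding cs_def
      by (simp add: last_map)
    moreover have "hd cs = s j0" using i0 unfolding cs_def by (simp add: upt_conv_Cons)
    moreover have "s j0 = f (s (j0 - 1))" using i0 s_Suc[of "j0 - 1"] by simp
    ultimately show "F (last cs) (hd cs)" using fp[OF slt] by simp
  next
    show "3 \<le> length cs"
    proof (rule ccontr)
      assume "\<not> 3 \<le> length cs"
      hence "j0 = Suc i0 \<or> j0 = Suc (Suc i0)" using lcs i0 by auto
      thus False
      proof
        assume "j0 = Suc i0"
        have "s i0 = s (Suc i0)" using i0(2) \<open>j0 = Suc i0\<close> by (simp only:)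
        also have "\<dots> = f (s i0)" by (rule s_Suc)
        finally have e: "s i0 = f (s i0)" .
        have "F (s i0) (s i0)" using fp[OF slt[of i0]] e by metis
        thus False using Firr by auto
      next
        assume "j0 = Suc (Suc i0)"
        have "s i0 = s (Suc (Suc i0))" using i0(2) \<open>j0 = Suc (Suc i0)\<close> by (simp only:)
        also have "\<dots> = f (s (Suc i0))" by (rule s_Suc)
        also have "\<dots> = f (f (s i0))" by (simp only: s_Suc)
        finally have "f (f (s i0)) = s i0" by simp
        thus False using ff[OF slt[of i0]] by simp
      qed
    qed
  qed
  thus False using nocyc by auto
qed

lemma separator: "\<exists>S cl. good S cl"
proof (cases "\<exists>t<m. \<forall>t'. F t t' \<longrightarrow> \<not> heavy t t'")
  case True thus ?thesis using caseA by auto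
next
  case False
  hence "\<forall>t<m. \<exists>t'. F t t' \<and> heavy t t'" by auto
  then obtain t t' where tt: "F t t'" "heavy t t'" "heavy t' t" using walk by blast
  show ?thesis
  proof (cases "card (branch t' t) \<ge> card (branch t t')")
    case True thus ?thesis using caseB tt by auto
  next
    case False thus ?thesis using caseB[of t' t] tt Fsym by auto
  qed
qed

end


lemma polygon:
  fixes w0 w1 w2 :: real
  assumes nn: "w0 \<ge> 0" "w1 \<ge> 0" "w2 \<ge> 0"
    and h: "2*w0 \<le> w0+w1+w2" "2*w1 \<le> w0+w1+w2" "2*w2 \<le> w0+w1+w2"
  shows "\<exists>c0 d0 c1 d1 c2 d2. c0^2+d0^2 = 1 \<and> c1^2+d1^2 = 1 \<and> c2^2+d2^2 = 1 \<and>
     w0*c0 + w1*c1 + w2*c2 = 0 \<and> w0*d0 + w1*d1 + w2*d2 = 0"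
proof (cases "w0 = 0 \<or> w1 = 0 \<or> w2 = 0")
  case True
  thus ?thesis
  proof (elim disjE)
    assume "w0 = 0" hence "w1 = w2" using h by auto
    thus ?thesis using \<open>w0 = 0\<close> by (intro exI[of _ 1] exI[of _ 0] exI[of _ 1] exI[of _ 0] exI[of _ "-1"] exI[of _ 0]) auto
  next
    assume "w1 = 0" hence "w0 = w2" using h by auto
    thus ?thesis using \<open>w1 = 0\<close> by (intro exI[of _ 1] exI[of _ 0] exI[of _ 1] exI[of _ 0] exI[of _ "-1"] exI[of _ 0]) auto
  next
    assume "w2 = 0" hence "w0 = w1" using h by auto
    thus ?thesis using \<open>w2 = 0\<close> by (intro exI[of _ 1] exI[of _ 0] exI[of _ "-1"] exI[of _ 0] exI[of _ 1] exI[of _ 0]) auto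
  qed
next
  case False
  hence p: "w0 > 0" "w1 > 0" "w2 > 0" using nn by auto
  define c1 where "c1 = (w2^2 - w0^2 - w1^2) / (2*w0*w1)"
  have a1: "w2^2 - w0^2 - w1^2 \<le> 2*w0*w1"
  proof -
    have "w2 \<le> w0 + w1" using h by auto
    hence "w2^2 \<le> (w0+w1)^2" using p by (intro power_mono) auto
    thus ?thesis by (simp add: power2_eq_square algebra_simps)
  qed
  have a2: "-(2*w0*w1) \<le> w2^2 - w0^2 - w1^2"
  proof -
    have "\<bar>w0 - w1\<bar> \<le> w2" using h by auto
    hence "\<bar>w0 - w1\<bar>^2 \<le> w2^2" by (intro power_mono) auto
    thus ?thesis by (simp add: power2_eq_square algebra_simps)
  qed
  have pos: "2*w0*w1 > 0" using p by auto
  have c1b: "\<bar>c1\<bar> \<le> 1" unfolding c1_def using a1 a2 pos by (auto simp: abs_le_iff divide_le_eq le_divide_eq)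
  hence c1sq: "c1^2 \<le> 1" by (metis abs_le_square_iff abs_one one_power2)
  define d1 where "d1 = sqrt (1 - c1^2)"
  have cd1: "c1^2 + d1^2 = 1" unfolding d1_def using c1sq by simp
  define c2 where "c2 = -(w0 + w1*c1)/w2"
  define d2 where "d2 = -(w1*d1)/w2"
  have pne: "2*w0*w1 \<noteq> 0" using p by simp
  have "2*w0*w1*c1 = w2^2 - w0^2 - w1^2" unfolding c1_def using pne
    by (simp only: times_divide_eq_right) (rule nonzero_mult_div_cancel_left)
  hence key: "w0^2 + 2*w0*w1*c1 + w1^2 = w2^2" by linarith
  have "c2^2 + d2^2 = ((w0 + w1*c1)^2 + (w1*d1)^2) / w2^2" unfolding c2_def d2_def
    by (simp add: power_divide add_divide_distrib power2_eq_square algebra_simps)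
  also have "(w0 + w1*c1)^2 + (w1*d1)^2 = w0^2 + 2*w0*w1*c1 + w1^2*(c1^2+d1^2)"
    by (simp add: power2_eq_square algebra_simps)
  also have "\<dots> = w2^2" using key cd1 by simp
  finally have cd2: "c2^2 + d2^2 = 1" using p by simp
  have e1: "w0*1 + w1*c1 + w2*c2 = 0" unfolding c2_def using p by (simp add: field_simps)
  have e2: "w0*0 + w1*d1 + w2*d2 = 0" unfolding d2_def using p by (simp add: field_simps)
  show ?thesis using cd1 cd2 e1 e2
    by (intro exI[of _ 1] exI[of _ 0] exI[of _ c1] exI[of _ d1] exI[of _ c2] exI[of _ d2]) auto
qed

lemma sum_indicator_const: "(\<Sum>v<(n::nat). if P v then (c::real) else 0) = c * real (card {v. v < n \<and> P v})"
proof -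
  have "(\<Sum>v<n. if P v then c else 0) = (\<Sum>v\<in>{v \<in> {..<n}. P v}. c)"
    by (rule sum.inter_filter[symmetric]) simp
  also have "{v \<in> {..<n}. P v} = {v. v < n \<and> P v}" by auto
  finally show ?thesis by simp
qed

context
  fixes n :: nat and E :: "nat \<Rightarrow> nat \<Rightarrow> bool"
  assumes sg: "simple_graph n E"
begin

lemma Esym: "E u v \<Longrightarrow> E v u" using sg unfolding simple_graph_def by auto
lemma Eirr: "\<not> E u u" using sg unfolding simple_graph_def by auto
lemma Elt: "E u v \<Longrightarrow> u < n \<and> v < n" using sg unfolding simple_graph_def by auto

lemma lap_carrier: "laplacian n E \<in> carrier_mat n n" unfolding laplacian_def by auto

lemma lap_sym: "transpose_mat (laplacian n E) = laplacian n E"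
  unfolding laplacian_def by (rule eq_matI) (auto dest: Esym)

lemma deg_sum: "real (degree_g n E u) = (\<Sum>v<n. if E u v then 1 else 0)"
  unfolding degree_g_def using sum_indicator_const[where n=n and P="E u" and c=1] by simp

lemma lap_mult: assumes x: "x \<in> carrier_vec n" and u: "u < n"
  shows "(laplacian n E *\<^sub>v x) $ u = (\<Sum>v<n. if E u v then x$u - x$v else 0)"
proof -
  let ?L = "laplacian n E"
  have "(?L *\<^sub>v x) $ u = (\<Sum>v<n. ?L $$ (u,v) * x$v)"
    using x u lap_carrier by (auto simp: scalar_prod_def lessThan_atLeast0 intro!: sum.cong)
  also have "\<dots> = (\<Sum>v<n. (if u = v then real (degree_g n E u) * x$u else 0) + (if E u v then - x$v else 0))"
    unfolding laplacian_def using u Eirr by (intro sum.cong) auto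
  also have "\<dots> = real (degree_g n E u) * x$u + (\<Sum>v<n. if E u v then - x$v else 0)"
    using u by (simp add: sum.distrib)
  also have "real (degree_g n E u) * x$u = (\<Sum>v<n. if E u v then x$u else 0)"
    by (simp add: degree_g_def sum_indicator_const mult.commute)
  also have "(\<Sum>v<n. if E u v then x$u else 0) + (\<Sum>v<n. if E u v then - x$v else 0)
      = (\<Sum>v<n. if E u v then x$u - x$v else 0)"
    by (simp add: sum.distrib[symmetric] if_distrib) (intro sum.cong, auto)
  finally show ?thesis .
qed

lemma lap_quad: assumes x: "x \<in> carrier_vec n"
  shows "x \<bullet> (laplacian n E *\<^sub>v x) = (\<Sum>u<n. \<Sum>v<n. if E u v then (x$u - x$v)^2 else 0) / 2"
proof -
  define q where "q = (\<Sum>u<n. \<Sum>v<n. if E u v then x$u * (x$u - x$v) else 0)"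
  have "x \<bullet> (laplacian n E *\<^sub>v x) = (\<Sum>u<n. x$u * (laplacian n E *\<^sub>v x) $ u)"
    using x lap_carrier by (simp add: scalar_prod_def lessThan_atLeast0)
  also have "\<dots> = q" unfolding q_def
    by (intro sum.cong refl) (auto simp: lap_mult[OF x] sum_distrib_left intro!: sum.cong)
  finally have xq: "x \<bullet> (laplacian n E *\<^sub>v x) = q" .
  have "q = (\<Sum>v<n. \<Sum>u<n. if E u v then x$u * (x$u - x$v) else 0)" unfolding q_def by (rule sum.swap)
  also have "\<dots> = (\<Sum>v<n. \<Sum>u<n. if E v u then x$u * (x$u - x$v) else 0)"
    by (intro sum.cong refl) (auto dest: Esym)
  finally have q2: "q = (\<Sum>u<n. \<Sum>v<n. if E u v then x$v * (x$v - x$u) else 0)" by simp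
  have "(\<Sum>u<n. \<Sum>v<n. if E u v then (x$u - x$v)^2 else 0) =
        (\<Sum>u<n. \<Sum>v<n. (if E u v then x$u * (x$u - x$v) else 0) + (if E u v then x$v * (x$v - x$u) else 0))"
    by (intro sum.cong refl) (auto simp: power2_eq_square algebra_simps)
  also have "\<dots> = (\<Sum>u<n. \<Sum>v<n. if E u v then x$u * (x$u - x$v) else 0) + 
     (\<Sum>u<n. \<Sum>v<n. if E u v then x$v * (x$v - x$u) else 0)" by (simp add: sum.distrib)
  also have "\<dots> = q + q" using q2 unfolding q_def by simp
  finally show ?thesis using xq by simp
qed

lemma lap_psd: "x \<in> carrier_vec n \<Longrightarrow> x \<bullet> (laplacian n E *\<^sub>v x) \<ge> 0"
  by (simp add: lap_quad sum_nonneg)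

lemma lap_one: "laplacian n E *\<^sub>v vec n (\<lambda>_. 1) = 0\<^sub>v n"
proof (rule eq_vecI)
  fix i assume "i < dim_vec (0\<^sub>v n :: real vec)"
  hence i: "i < n" by simp
  have "(laplacian n E *\<^sub>v vec n (\<lambda>_. 1)) $ i = (\<Sum>v<n. if E i v then vec n (\<lambda>_. 1::real) $ i - vec n (\<lambda>_. 1) $ v else 0)"
    by (rule lap_mult) (use i in auto)
  also have "\<dots> = 0" using i by (intro sum.neutral) auto
  finally show "(laplacian n E *\<^sub>v vec n (\<lambda>_. 1)) $ i = 0\<^sub>v n $ i" using i by simp
qed (simp add: laplacian_def)

end



lemma class_sum:
  fixes g :: "nat \<Rightarrow> real" and cl :: "nat \<Rightarrow> nat"
  assumes cl3: "\<forall>v. cl v < 3"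
  shows "(\<Sum>v<n. if v \<in> S then 0 else g (cl v)) = (\<Sum>i<3. g i * real (card {v. v < n \<and> v \<notin> S \<and> cl v = i}))"
proof -
  have "(\<Sum>v<n. if v \<in> S then 0 else g (cl v)) = (\<Sum>v<n. \<Sum>i<3. if v \<notin> S \<and> cl v = i then g i else 0)"
  proof (intro sum.cong refl)
    fix v
    show "(if v \<in> S then 0 else g (cl v)) = (\<Sum>i<3. if v \<notin> S \<and> cl v = i then g i else 0)"
    proof (cases "v \<in> S")
      case False
      have "(\<Sum>i<3. if v \<notin> S \<and> cl v = i then g i else 0) = (\<Sum>i<3. if cl v = i then g i else 0)"
        using False by simp
      also have "\<dots> = g (cl v)" using cl3 by (simp add: sum.delta')
      finally show ?thesis using False by simp
    qed simp
  qed
  also have "\<dots> = (\<Sum>i<3. \<Sum>v<n. if v \<notin> S \<and> cl v = i then g i else 0)" by (rule sum.swap)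
  also have "\<dots> = (\<Sum>i<3. g i * real (card {v. v < n \<and> v \<notin> S \<and> cl v = i}))"
    by (intro sum.cong refl) (rule sum_indicator_const)
  finally show ?thesis .
qed

theorem theorem1:
  fixes n :: nat and E :: "nat \<Rightarrow> nat \<Rightarrow> bool"
  assumes "simple_graph n E"
    and "max_degree n E \<ge> 1"
  shows "real (treewidth n E) \<ge>
           real n * lambda2 n E / (real (max_degree n E) + lambda2 n E) - 1"
proof (cases "n = 0")
  case True thus ?thesis by simp
next
  case False
  note sg = assms(1)
  define D where "D = max_degree n E"
  have D1: "D \<ge> 1" using assms(2) unfolding D_def .
  have fin: "finite (degree_g n E ` {0..<n})" "degree_g n E ` {0..<n} \<noteq> {}" using False by auto
  have degle: "degree_g n E u \<le> D" if "u < n" for u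
    unfolding D_def max_degree_def using fin that by (intro Max_ge) auto
  have "D \<in> degree_g n E ` {0..<n}" unfolding D_def max_degree_def using fin by (rule Max_in)
  then obtain u where u: "u < n" "degree_g n E u = D" by auto
  hence "card {v. v < n \<and> E u v} \<ge> 1" using D1 unfolding degree_g_def by simp
  then obtain v where v: "v < n" "E u v" by (metis (mono_tags, lifting) One_nat_def card.empty empty_Collect_eq not_less_eq_eq zero_le)
  have "v \<noteq> u" using v Eirr[OF sg] by auto
  hence n2: "n \<ge> 2" using u v by linarith
  let ?L = "laplacian n E"
  let ?one = "vec n (\<lambda>_. 1::real)"
  define lam where "lam = lambda2 n E"
  have cf: "length (sorted_list_of_multiset (proots (char_poly ?L))) = n \<and> sorted_list_of_multiset (proots (char_poly ?L)) ! 1 \<ge> 0 \<and>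
    (\<forall>x. x \<in> carrier_vec n \<longrightarrow> x \<bullet> ?one = 0 \<longrightarrow> sorted_list_of_multiset (proots (char_poly ?L)) ! 1 * (x \<bullet> x) \<le> x \<bullet> (?L *\<^sub>v x))"
    by (rule cf_bound[OF lap_carrier[OF sg] lap_sym[OF sg] lap_psd[OF sg] lap_one[OF sg] n2])
  have lamdef: "lam = sorted_list_of_multiset (proots (char_poly ?L)) ! 1"
    unfolding lam_def lambda2_def laplacian_eigenvalues_def ..
  have lam0: "lam \<ge> 0" using cf lamdef by simp
  have ray: "lam * (x \<bullet> x) \<le> x \<bullet> (?L *\<^sub>v x)" if "x \<in> carrier_vec n" "x \<bullet> ?one = 0" for x
    using cf lamdef that by simp
  have td1: "tree_decomposition n E 1 (\<lambda>_ _. False) (\<lambda>_. {0..<n})"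
    unfolding tree_decomposition_def is_tree_def simple_graph_def connected_on_def is_cycle_def
    using Elt[OF sg] by auto
  hence "\<exists>k m F B. tree_decomposition n E m F B \<and> decomposition_width m B = k" by blast
  from LeastI_ex[OF this]
  obtain m F B where td: "tree_decomposition n E m F B" and wk: "decomposition_width m B = treewidth n E"
    unfolding treewidth_def by blast
  interpret tdec n E m F B using td by unfold_locales
  obtain S cl where good: "good S cl" using separator by blast
  then obtain t where t: "t < m" "S \<subseteq> B t" and cl3: "\<forall>v. cl v < 3"
    and eg: "\<forall>u v. E u v \<longrightarrow> u \<notin> S \<longrightarrow> v \<notin> S \<longrightarrow> cl u = cl v"
    and sz: "\<forall>i<3. 2 * card {v. v < n \<and> v \<notin> S \<and> cl v = i} \<le> n - card S"
    unfolding good_def by blast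
  have Bt: "B t \<subseteq> {0..<n}" using bags t by auto
  have Sn: "S \<subseteq> {0..<n}" using t Bt by auto
  have finS: "finite S" using Sn finite_subset by blast
  have cardS: "card S \<le> treewidth n E + 1"
  proof -
    have "card S \<le> card (B t)" using t Bt by (intro card_mono) (auto intro: finite_subset)
    also have "card (B t) \<le> Max ((\<lambda>t. card (B t)) ` {0..<m})" using t by (intro Max_ge) auto
    finally show ?thesis using wk unfolding decomposition_width_def by linarith
  qed
  have Sle: "card S \<le> n" using Sn by (metis card_atLeastLessThan card_mono finite_atLeastLessThan diff_zero)
  define W where "W i = real (card {v. v < n \<and> v \<notin> S \<and> cl v = i})" for i
  have sumW: "W 0 + W 1 + W 2 = real n - real (card S)"
  proof -
    have "(\<Sum>v<n. if v \<in> S then 0 else (1::real)) = (\<Sum>i<3. 1 * W i)"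
      unfolding W_def by (rule class_sum[OF cl3])
    also have "(\<Sum>i<3. 1 * W i) = W 0 + W 1 + W 2" by (simp add: eval_nat_numeral)
    finally have "W 0 + W 1 + W 2 = (\<Sum>v<n. if v \<in> S then 0 else (1::real))" by simp
    also have "\<dots> = (\<Sum>v<n. if v \<notin> S then 1 else 0)" by (intro sum.cong) auto
    also have "\<dots> = real (card {v. v < n \<and> v \<notin> S})" by (simp add: sum_indicator_const)
    also have "{v. v < n \<and> v \<notin> S} = {0..<n} - S" by auto
    also have "card ({0..<n} - S) = n - card S" using Sn finS by (simp add: card_Diff_subset)
    finally show ?thesis using Sle by simp
  qed
  have Wnn: "W i \<ge> 0" for i unfolding W_def by simp
  have Wle: "2 * W i \<le> W 0 + W 1 + W 2" if "i < 3" for i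
  proof -
    have "2 * card {v. v < n \<and> v \<notin> S \<and> cl v = i} \<le> n - card S" using sz that by auto
    hence "2 * W i \<le> real (n - card S)" unfolding W_def by linarith
    thus ?thesis using sumW Sle by (simp add: of_nat_diff)
  qed
  obtain c0 d0 c1 d1 c2 d2 where pg: "c0^2+d0^2 = 1" "c1^2+d1^2 = 1" "c2^2+d2^2 = 1"
     "W 0*c0 + W 1*c1 + W 2*c2 = 0" "W 0*d0 + W 1*d1 + W 2*d2 = 0"
    using polygon[OF Wnn Wnn Wnn Wle[of 0] Wle[of 1] Wle[of 2]] by auto
  define c where "c i = (if i = 0 then c0 else if i = 1 then c1 else c2)" for i :: nat
  define d where "d i = (if i = 0 then d0 else if i = 1 then d1 else d2)" for i :: nat
  have cd1: "c i ^2 + d i ^2 = 1" for i unfolding c_def d_def using pg by auto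
  define x where "x = vec n (\<lambda>v. if v \<in> S then 0 else c (cl v))"
  define y where "y = vec n (\<lambda>v. if v \<in> S then 0 else d (cl v))"
  have x: "x \<in> carrier_vec n" and y: "y \<in> carrier_vec n" unfolding x_def y_def by auto
  have sum3: "(\<Sum>i<3. f i) = f 0 + f 1 + f (2::nat)" for f :: "nat \<Rightarrow> real" by (simp add: eval_nat_numeral)
  have x1: "x \<bullet> ?one = 0"
  proof -
    have "x \<bullet> ?one = (\<Sum>v<n. if v \<in> S then 0 else c (cl v))"
      unfolding x_def scalar_prod_def by (simp add: lessThan_atLeast0)
    also have "\<dots> = (\<Sum>i<3. c i * W i)" unfolding W_def by (rule class_sum[OF cl3])
    also have "\<dots> = 0" unfolding sum3 c_def using pg(4) by (simp add: mult.commute)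
    finally show ?thesis .
  qed
  have y1: "y \<bullet> ?one = 0"
  proof -
    have "y \<bullet> ?one = (\<Sum>v<n. if v \<in> S then 0 else d (cl v))"
      unfolding y_def scalar_prod_def by (simp add: lessThan_atLeast0)
    also have "\<dots> = (\<Sum>i<3. d i * W i)" unfolding W_def by (rule class_sum[OF cl3])
    also have "\<dots> = 0" unfolding sum3 d_def using pg(5) by (simp add: mult.commute)
    finally show ?thesis .
  qed
  have norm: "x \<bullet> x + y \<bullet> y = real n - real (card S)"
  proof -
    have xx: "x \<bullet> x = (\<Sum>v<n. if v \<in> S then 0 else c (cl v) ^2)"
    proof -
      have "x \<bullet> x = (\<Sum>v\<in>{0..<n}. x$v * x$v)" using x by (simp add: scalar_prod_def)
      also have "\<dots> = (\<Sum>v\<in>{0..<n}. if v \<in> S then 0 else c (cl v) ^2)"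
        by (rule sum.cong) (auto simp: x_def power2_eq_square)
      finally show ?thesis by (simp only: lessThan_atLeast0)
    qed
    have yy: "y \<bullet> y = (\<Sum>v<n. if v \<in> S then 0 else d (cl v) ^2)"
    proof -
      have "y \<bullet> y = (\<Sum>v\<in>{0..<n}. y$v * y$v)" using y by (simp add: scalar_prod_def)
      also have "\<dots> = (\<Sum>v\<in>{0..<n}. if v \<in> S then 0 else d (cl v) ^2)"
        by (rule sum.cong) (auto simp: y_def power2_eq_square)
      finally show ?thesis by (simp only: lessThan_atLeast0)
    qed
    have "x \<bullet> x + y \<bullet> y = (\<Sum>v<n. if v \<in> S then 0 else c (cl v) ^2 + d (cl v) ^2)"
      unfolding xx yy sum.distrib[symmetric] by (rule sum.cong) auto
    also have "\<dots> = (\<Sum>i<3. (c i ^2 + d i ^2) * W i)" unfolding W_def by (rule class_sum[OF cl3])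
    also have "\<dots> = W 0 + W 1 + W 2" unfolding cd1 sum3 by simp
    finally show ?thesis using sumW by simp
  qed
  have pt: "(x$u - x$v)^2 + (y$u - y$v)^2 \<le> (if u \<in> S then 1 else 0) + (if v \<in> S then 1 else 0)"
    if "u < n" "v < n" "E u v" for u v
  proof -
    have xu: "x$u = (if u \<in> S then 0 else c (cl u))" "y$u = (if u \<in> S then 0 else d (cl u))"
      and xv: "x$v = (if v \<in> S then 0 else c (cl v))" "y$v = (if v \<in> S then 0 else d (cl v))"
      unfolding x_def y_def using that by auto
    show ?thesis
    proof (cases "u \<in> S"; cases "v \<in> S")
      assume "u \<notin> S" "v \<notin> S"
      hence "cl u = cl v" using eg that by auto
      thus ?thesis using xu xv \<open>u \<notin> S\<close> \<open>v \<notin> S\<close> by simp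
    next
      assume "u \<in> S" "v \<notin> S"
      thus ?thesis using xu xv cd1[of "cl v"] by simp
    next
      assume "u \<notin> S" "v \<in> S"
      thus ?thesis using xu xv cd1[of "cl u"] by simp
    qed (use xu xv in simp)
  qed
  have quad: "x \<bullet> (?L *\<^sub>v x) + y \<bullet> (?L *\<^sub>v y) \<le> real (card S) * real D"
  proof -
    let ?I = "\<lambda>u. if u \<in> S then 1 else (0::real)"
    have "x \<bullet> (?L *\<^sub>v x) + y \<bullet> (?L *\<^sub>v y) =
      (\<Sum>u<n. \<Sum>v<n. if E u v then (x$u - x$v)^2 + (y$u - y$v)^2 else 0) / 2"
    proof -
      have "(\<Sum>u<n. \<Sum>v<n. if E u v then (x$u - x$v)^2 + (y$u - y$v)^2 else 0) =
        (\<Sum>u<n. \<Sum>v<n. if E u v then (x$u - x$v)^2 else 0) + (\<Sum>u<n. \<Sum>v<n. if E u v then (y$u - y$v)^2 else 0)"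
        unfolding sum.distrib[symmetric] by (intro sum.cong refl) simp
      thus ?thesis unfolding lap_quad[OF sg x] lap_quad[OF sg y] by (simp only: add_divide_distrib)
    qed
    also have "(\<Sum>u<n. \<Sum>v<n. if E u v then (x$u - x$v)^2 + (y$u - y$v)^2 else 0)
       \<le> (\<Sum>u<n. \<Sum>v<n. if E u v then ?I u + ?I v else 0)"
      by (intro sum_mono) (use pt in auto)
    also have "\<dots> = (\<Sum>u<n. \<Sum>v<n. if E u v then ?I u else 0) + (\<Sum>u<n. \<Sum>v<n. if E u v then ?I v else 0)"
      unfolding sum.distrib[symmetric] by (intro sum.cong refl) simp
    also have "(\<Sum>u<n. \<Sum>v<n. if E u v then ?I v else 0) = (\<Sum>v<n. \<Sum>u<n. if E u v then ?I v else 0)"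
      by (rule sum.swap)
    also have "\<dots> = (\<Sum>u<n. \<Sum>v<n. if E u v then ?I u else 0)"
      by (intro sum.cong refl) (auto dest: Esym[OF sg])
    also have "(\<Sum>u<n. \<Sum>v<n. if E u v then ?I u else 0) = (\<Sum>u<n. ?I u * real (degree_g n E u))"
      by (intro sum.cong refl) (auto simp: deg_sum[OF sg])
    also have "\<dots> \<le> (\<Sum>u<n. ?I u * real D)"
      by (intro sum_mono) (use degle in auto)
    also have "\<dots> = real (card S) * real D"
    proof -
      have "(\<Sum>u<n. ?I u * real D) = real D * (\<Sum>u<n. ?I u)" by (simp add: sum_distrib_left mult.commute)
      also have "(\<Sum>u<n. ?I u) = real (card {u. u < n \<and> u \<in> S})" by (rule sum_indicator_const[where c=1, simplified])
      also have "{u. u < n \<and> u \<in> S} = S" using Sn by auto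
      finally show ?thesis by simp
    qed
    finally show ?thesis by (simp add: mult.commute)
  qed
  have "lam * (x \<bullet> x + y \<bullet> y) \<le> x \<bullet> (?L *\<^sub>v x) + y \<bullet> (?L *\<^sub>v y)"
    using ray[OF x x1] ray[OF y y1] by (simp add: distrib_left)
  hence "lam * (real n - real (card S)) \<le> real (card S) * real D" using quad norm by simp
  hence key: "lam * real n \<le> real (card S) * (real D + lam)" by (simp add: algebra_simps)
  have pos: "real D + lam > 0" using D1 lam0 by simp
  have "real n * lam / (real D + lam) \<le> real (card S)"
    using key pos by (simp add: divide_le_eq mult.commute)
  also have "\<dots> \<le> real (treewidth n E) + 1" using cardS by simp
  finally show ?thesis unfolding D_def lam_def by simp
qed



end
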